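(* There exists a measurable function $f:S^1\to S^1$ whose Fourier coefficients satisfy $a_n=0$ for all $n\ge0$, such that $\sum_{n\in\mathbb Z}|n|^{2s'}|a_n|^2<\infty$ for every $s'<\tfrac12$, but $\sum_{n\in\mathbb Z}|n|^{2s}|a_n|^2=\infty$ for every $s\ge\tfrac12$. (Such an $f$ is obtained as $f(e^{it})=e^{-it}g(e^{-it})$ where $g$ is a Blaschke product which is not a rational function and whose Taylor coefficients are $O(1/n)$; the existence of such $g$ is a result of Newman and Shapiro.)
   Context: $S^1=\{z\in\mathbb C:|z|=1\}$; $a_n=\frac{1}{2\pi}\int_{-\pi}^{\pi}f(e^{it})e^{-int}\,dt$. One may assume the known result (Newman–Shapiro, 1962) that there exists a Blaschke product $g(z)=\sum_{n\ge0}b_nz^n$ on the unit disc which is not a rational function and satisfies $b_n=O(1/n)$ as $n\to\infty$. *)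

theory Defs
  imports "HOL-Analysis.Analysis"
begin

abbreviation circle :: "complex set" where
  "circle \<equiv> sphere 0 1"

definition fourier_coeff :: "(complex \<Rightarrow> complex) \<Rightarrow> int \<Rightarrow> complex" where
  "fourier_coeff f n =
     complex_of_real (1 / (2 * pi)) *
     (LBINT t=-pi..pi. f (exp (\<i> * complex_of_real t)) * exp (- \<i> * of_int n * complex_of_real t))"

end

theory Submission
  imports Defs
begin

lemma int_exp_has_integral:
  fixes k :: int
  shows "((\<lambda>t. exp (\<i> * of_int k * complex_of_real t)) has_integral
            (if k = 0 then complex_of_real (2*pi) else 0)) {-pi..pi}"
proof (cases "k = 0")
  case True
  have "((\<lambda>t. 1::complex) has_integral complex_of_real (2*pi)) {-pi..pi}"
    using has_integral_const_real[of "1::complex" "-pi" pi] pi_gt_zero by (simp add: scaleR_conv_of_real)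
  then show ?thesis using True by simp
next
  case False
  define F where "F t = exp (\<i> * of_int k * complex_of_real t) / (\<i> * of_int k)" for t
  have d0: "((\<lambda>z. exp (\<i> * of_int k * z) / (\<i> * of_int k)) has_field_derivative exp (\<i> * of_int k * complex_of_real t)) (at (complex_of_real t))" for t
    using False by (auto intro!: derivative_eq_intros simp: field_simps)
  have d: "(F has_vector_derivative exp (\<i> * of_int k * complex_of_real t)) (at t within {-pi..pi})" for t
    unfolding F_def by (rule has_vector_derivative_real_field[OF d0])
  have ftc: "((\<lambda>t. exp (\<i> * of_int k * complex_of_real t)) has_integral (F pi - F (-pi))) {-pi..pi}"
    by (rule fundamental_theorem_of_calculus) (use d pi_gt_zero in auto)
  have "exp (\<i> * of_int k * complex_of_real pi) = exp (\<i> * of_int k * complex_of_real (-pi))"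
  proof -
    have "exp (\<i> * of_int k * complex_of_real pi) = exp (\<i> * of_int k * complex_of_real (-pi)) * exp (2 * pi * \<i> * of_int k)"
    proof -
      have "\<i> * of_int k * complex_of_real pi = \<i> * of_int k * complex_of_real (-pi) + 2 * pi * \<i> * of_int k"
        by (simp add: algebra_simps)
      then show ?thesis by (simp only: exp_add)
    qed
    also have "exp (2 * pi * \<i> * of_int k) = 1" by (simp add: exp_eq_1)
    finally show ?thesis by simp
  qed
  then have "F pi - F (-pi) = 0" unfolding F_def by simp
  then show ?thesis using ftc False by simp
qed

lemma norm_exp_i_real [simp]: "norm (exp (\<i> * complex_of_real t)) = 1"
  by (simp add: norm_exp_eq_Re)

lemma exp_i_mult_pow:
  "(complex_of_real r * exp (\<i> * complex_of_real t)) ^ m * exp (- \<i> * of_int n * complex_of_real t)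
   = complex_of_real r ^ m * exp (\<i> * of_int (int m - n) * complex_of_real t)"
proof -
  have "exp (\<i> * complex_of_real t) ^ m = exp (of_nat m * (\<i> * complex_of_real t))"
    by (simp add: exp_of_nat_mult)
  then have "(complex_of_real r * exp (\<i> * complex_of_real t)) ^ m * exp (- \<i> * of_int n * complex_of_real t)
     = complex_of_real r ^ m * (exp (of_nat m * (\<i> * complex_of_real t) + (- \<i> * of_int n * complex_of_real t)))"
    by (simp only: power_mult_distrib exp_add mult.assoc)
  also have "of_nat m * (\<i> * complex_of_real t) + (- \<i> * of_int n * complex_of_real t) = \<i> * of_int (int m - n) * complex_of_real t"
    by (simp add: algebra_simps)
  finally show ?thesis .
qed

lemma fps_fourier:
  fixes F :: "complex fps" and r :: real and n :: int
  assumes r: "0 \<le> r" "ereal r < fps_conv_radius F"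
  shows "((\<lambda>t. eval_fps F (of_real r * exp (\<i> * of_real t)) * exp (- \<i> * of_int n * of_real t)) has_integral
           (of_real (2*pi) * (if n \<ge> 0 then fps_nth F (nat n) * of_real r ^ nat n else 0))) {-pi..pi}"
proof -
  define u where "u m t = fps_nth F m * (of_real r * exp (\<i> * of_real t)) ^ m * exp (- \<i> * of_int n * of_real t)" for m t
  define c where "c = of_real (2*pi) * (if n \<ge> 0 then fps_nth F (nat n) * of_real r ^ nat n else 0)"
  have u_eq: "u m t = fps_nth F m * of_real r ^ m * exp (\<i> * of_int (int m - n) * complex_of_real t)" for m t
    unfolding u_def using exp_i_mult_pow[of r t m n] by (simp add: mult.assoc)
  have iu: "(u m has_integral (if int m = n then of_real (2*pi) * (fps_nth F m * of_real r ^ m) else 0)) {-pi..pi}" for m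
  proof -
    have "((\<lambda>t. fps_nth F m * of_real r ^ m * exp (\<i> * of_int (int m - n) * complex_of_real t)) has_integral
          (fps_nth F m * of_real r ^ m) * (if int m - n = 0 then complex_of_real (2*pi) else 0)) {-pi..pi}"
      by (rule has_integral_mult_right[OF int_exp_has_integral])
    moreover have "(fps_nth F m * of_real r ^ m) * (if int m - n = 0 then complex_of_real (2*pi) else 0)
        = (if int m = n then of_real (2*pi) * (fps_nth F m * of_real r ^ m) else 0)"
      by (cases "int m = n") (simp_all add: mult.commute)
    ultimately show ?thesis unfolding u_eq[abs_def] by simp
  qed
  define S where "S M t = (\<Sum>m<M. u m t)" for M t
  have iS: "(S M has_integral (\<Sum>m<M. (if int m = n then of_real (2*pi) * (fps_nth F m * of_real r ^ m) else 0))) {-pi..pi}" for M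
    unfolding S_def[abs_def] by (rule has_integral_sum) (use iu in auto)
  have sumval: "(\<Sum>m<M. (if int m = n then of_real (2*pi) * (fps_nth F m * of_real r ^ m) else 0))
       = (if 0 \<le> n \<and> nat n < M then c else 0)" for M
  proof (cases "0 \<le> n \<and> nat n < M")
    case True
    then have "(\<Sum>m<M. (if int m = n then of_real (2*pi) * (fps_nth F m * of_real r ^ m) else 0))
        = (\<Sum>m\<in>{nat n}. (if int m = n then of_real (2*pi) * (fps_nth F m * of_real r ^ m) else 0))"
      by (intro sum.mono_neutral_right) auto
    then show ?thesis using True by (simp add: c_def)
  next
    case False
    then have "\<forall>m<M. int m \<noteq> n" by auto
    then have "(\<Sum>m<M. (if int m = n then of_real (2*pi) * (fps_nth F m * of_real r ^ m) else 0)) = 0"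
      by (intro sum.neutral) auto
    then show ?thesis by (simp only: if_not_P[OF False])
  qed
  have nz: "norm (complex_of_real r) < fps_conv_radius F" using r by simp
  define A where "A = (\<Sum>m. norm (fps_nth F m * (complex_of_real r) ^ m))"
  have sumA: "summable (\<lambda>m. norm (fps_nth F m * (complex_of_real r) ^ m))"
    by (rule norm_summable_fps[OF nz])
  have normu: "norm (u m t) = norm (fps_nth F m * (complex_of_real r) ^ m)" for m t
    unfolding u_def by (simp add: norm_mult norm_power)
  have bnd: "norm (S M t) \<le> A" if "t \<in> {-pi..pi}" for M t
  proof -
    have "norm (S M t) \<le> (\<Sum>m<M. norm (u m t))" unfolding S_def by (rule norm_sum)
    also have "\<dots> = (\<Sum>m<M. norm (fps_nth F m * (complex_of_real r) ^ m))" by (simp add: normu)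
    also have "\<dots> \<le> A" unfolding A_def by (rule sum_le_suminf[OF sumA]) auto
    finally show ?thesis .
  qed
  have conv: "(\<lambda>M. S M t) \<longlonglongrightarrow> eval_fps F (of_real r * exp (\<i> * of_real t)) * exp (- \<i> * of_int n * of_real t)" if "t \<in> {-pi..pi}" for t
  proof -
    have nz': "norm (complex_of_real r * exp (\<i> * complex_of_real t)) < fps_conv_radius F"
      using nz by (simp add: norm_mult)
    have "(\<lambda>m. fps_nth F m * (of_real r * exp (\<i> * of_real t)) ^ m) sums eval_fps F (of_real r * exp (\<i> * of_real t))"
      by (rule sums_eval_fps[OF nz'])
    then have "(\<lambda>m. u m t) sums (eval_fps F (of_real r * exp (\<i> * of_real t)) * exp (- \<i> * of_int n * of_real t))"
      unfolding u_def by (rule sums_mult2)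
    then show ?thesis unfolding S_def sums_def .
  qed
  have intS: "S M integrable_on {-pi..pi}" for M using iS by blast
  have intA: "(\<lambda>t. A) integrable_on {-pi..pi}" by (intro integrable_continuous_interval continuous_intros)
  note dc = dominated_convergence[OF intS intA bnd conv]
  have "(\<lambda>M. integral {-pi..pi} (S M)) = (\<lambda>M. if 0 \<le> n \<and> nat n < M then c else 0)"
    using iS sumval by (auto simp: integral_unique)
  moreover have "(\<lambda>M. if 0 \<le> n \<and> nat n < M then c else 0) \<longlonglongrightarrow> c"
  proof (cases "0 \<le> n")
    case True
    then have "eventually (\<lambda>M. (if 0 \<le> n \<and> nat n < M then c else 0) = c) sequentially"
      by (auto simp: eventually_at_top_linorder intro!: exI[of _ "Suc (nat n)"])
    then show ?thesis by (rule tendsto_eventually)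
  next
    case False then show ?thesis by (simp add: c_def)
  qed
  ultimately have "(\<lambda>M. integral {-pi..pi} (S M)) \<longlonglongrightarrow> c" by simp
  then have "integral {-pi..pi} (\<lambda>t. eval_fps F (of_real r * exp (\<i> * of_real t)) * exp (- \<i> * of_int n * of_real t)) = c"
    using LIMSEQ_unique[OF dc(2)] by blast
  with integrable_integral[OF dc(1)] show ?thesis unfolding c_def by simp
qed

lemma norm_eval_fps_le:
  fixes F :: "complex fps"
  assumes "norm z < fps_conv_radius F"
  shows "norm (eval_fps F z) \<le> (\<Sum>m. norm (fps_nth F m * z ^ m))"
  unfolding eval_fps_def by (rule summable_norm[OF norm_summable_fps[OF assms]])

lemma fps_parseval:
  fixes F G :: "complex fps" and r :: real
  assumes r: "0 \<le> r" "ereal r < fps_conv_radius F" "ereal r < fps_conv_radius G"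
  shows "(\<lambda>t. eval_fps F (of_real r * exp (\<i> * of_real t)) * cnj (eval_fps G (of_real r * exp (\<i> * of_real t)))) integrable_on {-pi..pi}"
    and "(\<lambda>m. of_real (2*pi) * (fps_nth F m * cnj (fps_nth G m) * of_real r ^ (2*m))) sums
          integral {-pi..pi} (\<lambda>t. eval_fps F (of_real r * exp (\<i> * of_real t)) * cnj (eval_fps G (of_real r * exp (\<i> * of_real t))))"
proof -
  define E where "E t = of_real r * exp (\<i> * complex_of_real t)" for t
  have nE: "norm (E t) = r" for t using r by (simp add: E_def norm_mult)
  have nzF: "norm (E t) < fps_conv_radius F" "norm (E t) < fps_conv_radius G" for t using r nE by auto
  have nzF0: "norm (complex_of_real r) < fps_conv_radius F" "norm (complex_of_real r) < fps_conv_radius G" using r by auto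
  define AF where "AF = (\<Sum>m. norm (fps_nth F m * (complex_of_real r) ^ m))"
  define AG where "AG = (\<Sum>m. norm (fps_nth G m * (complex_of_real r) ^ m))"
  have sAG: "summable (\<lambda>m. norm (fps_nth G m * (complex_of_real r) ^ m))" by (rule norm_summable_fps[OF nzF0(2)])
  have bF: "norm (eval_fps F (E t)) \<le> AF" for t
  proof -
    have "norm (eval_fps F (E t)) \<le> (\<Sum>m. norm (fps_nth F m * (E t) ^ m))" by (rule norm_eval_fps_le[OF nzF(1)])
    also have "\<dots> = AF" unfolding AF_def using r(1) by (simp add: norm_mult norm_power nE)
    finally show ?thesis .
  qed
  have AF0: "0 \<le> AF" using bF[of 0] norm_ge_zero order_trans by blast
  define w where "w m t = eval_fps F (E t) * (cnj (fps_nth G m) * of_real r ^ m * exp (- \<i> * of_int (int m) * of_real t))" for m t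
  have iw: "(w m has_integral (cnj (fps_nth G m) * of_real r ^ m) * (of_real (2*pi) * (fps_nth F m * of_real r ^ m))) {-pi..pi}" for m
  proof -
    have "((\<lambda>t. (cnj (fps_nth G m) * of_real r ^ m) * (eval_fps F (E t) * exp (- \<i> * of_int (int m) * of_real t))) has_integral
          (cnj (fps_nth G m) * of_real r ^ m) * (of_real (2*pi) * (fps_nth F m * of_real r ^ m))) {-pi..pi}"
      using has_integral_mult_right[OF fps_fourier[OF r(1,2), of "int m"]] unfolding E_def by simp
    then show ?thesis unfolding w_def[abs_def] by (simp add: ac_simps)
  qed
  define T where "T M t = (\<Sum>m<M. w m t)" for M t
  have iT: "(T M has_integral (\<Sum>m<M. (cnj (fps_nth G m) * of_real r ^ m) * (of_real (2*pi) * (fps_nth F m * of_real r ^ m)))) {-pi..pi}" for M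
    unfolding T_def[abs_def] by (rule has_integral_sum) (use iw in auto)
  have bT: "norm (T M t) \<le> AF * AG" if "t \<in> {-pi..pi}" for M t
  proof -
    have "T M t = eval_fps F (E t) * (\<Sum>m<M. cnj (fps_nth G m) * of_real r ^ m * exp (- \<i> * of_int (int m) * of_real t))"
      unfolding T_def w_def by (simp add: sum_distrib_left)
    also have "norm \<dots> \<le> AF * AG"
    proof -
      have "norm (\<Sum>m<M. cnj (fps_nth G m) * of_real r ^ m * exp (- \<i> * of_int (int m) * of_real t))
          \<le> (\<Sum>m<M. norm (cnj (fps_nth G m) * of_real r ^ m * exp (- \<i> * of_int (int m) * of_real t)))" by (rule norm_sum)
      also have "\<dots> = (\<Sum>m<M. norm (fps_nth G m * (complex_of_real r) ^ m))"
      proof (intro sum.cong refl)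
        fix m
        have "exp (- \<i> * of_int (int m) * complex_of_real t) = exp (\<i> * complex_of_real (- (real m * t)))" by (simp add: mult.assoc)
        then have "norm (exp (- \<i> * of_int (int m) * complex_of_real t)) = 1" by (simp only: norm_exp_i_real)
        then show "norm (cnj (fps_nth G m) * of_real r ^ m * exp (- \<i> * of_int (int m) * of_real t)) = norm (fps_nth G m * (complex_of_real r) ^ m)"
          by (simp add: norm_mult norm_power)
      qed
      also have "\<dots> \<le> AG" unfolding AG_def by (rule sum_le_suminf[OF sAG]) auto
      finally have "norm (\<Sum>m<M. cnj (fps_nth G m) * of_real r ^ m * exp (- \<i> * of_int (int m) * of_real t)) \<le> AG" .
      then show ?thesis unfolding norm_mult by (intro mult_mono bF AF0) auto
    qed
    finally show ?thesis .
  qed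
  have conv: "(\<lambda>M. T M t) \<longlonglongrightarrow> eval_fps F (E t) * cnj (eval_fps G (E t))" if "t \<in> {-pi..pi}" for t
  proof -
    have "(\<lambda>m. fps_nth G m * (E t) ^ m) sums eval_fps G (E t)" by (rule sums_eval_fps[OF nzF(2)])
    then have "(\<lambda>m. cnj (fps_nth G m * (E t) ^ m)) sums cnj (eval_fps G (E t))" by (simp only: sums_cnj)
    moreover have eqm: "cnj (fps_nth G m * (E t) ^ m) = cnj (fps_nth G m) * of_real r ^ m * exp (- \<i> * of_int (int m) * of_real t)" for m
    proof -
      have "cnj (E t) ^ m = (of_real r * exp (- \<i> * complex_of_real t)) ^ m" by (simp add: E_def exp_cnj)
      also have "\<dots> = of_real r ^ m * exp (of_nat m * (- \<i> * complex_of_real t))" by (simp only: power_mult_distrib exp_of_nat_mult)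
      finally have e1: "cnj (E t) ^ m = of_real r ^ m * exp (of_nat m * (- \<i> * complex_of_real t))" .
      have e2: "of_nat m * (- \<i> * complex_of_real t) = - \<i> * of_int (int m) * of_real t" by simp
      show ?thesis by (simp only: e1 e2 complex_cnj_mult complex_cnj_power mult.assoc)
    qed
    ultimately have "(\<lambda>m. cnj (fps_nth G m) * of_real r ^ m * exp (- \<i> * of_int (int m) * of_real t)) sums cnj (eval_fps G (E t))" by (simp only: eqm)
    then have "(\<lambda>m. w m t) sums (eval_fps F (E t) * cnj (eval_fps G (E t)))" unfolding w_def by (rule sums_mult)
    then show ?thesis unfolding T_def sums_def .
  qed
  have intT: "T M integrable_on {-pi..pi}" for M using iT by blast
  have intA: "(\<lambda>t. AF * AG) integrable_on {-pi..pi}" by (intro integrable_continuous_interval continuous_intros)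
  note dc = dominated_convergence[OF intT intA bT conv]
  show "(\<lambda>t. eval_fps F (of_real r * exp (\<i> * of_real t)) * cnj (eval_fps G (of_real r * exp (\<i> * of_real t)))) integrable_on {-pi..pi}"
    using dc(1) unfolding E_def .
  have term_eq: "(cnj (fps_nth G m) * of_real r ^ m) * (of_real (2*pi) * (fps_nth F m * of_real r ^ m))
      = of_real (2*pi) * (fps_nth F m * cnj (fps_nth G m) * of_real r ^ (2*m))" for m
  proof -
    have "(of_real r :: complex) ^ (2*m) = of_real r ^ m * of_real r ^ m" by (simp only: mult_2 power_add)
    then show ?thesis by (simp only: mult_ac)
  qed
  have "integral {-pi..pi} (T M) = (\<Sum>m<M. of_real (2*pi) * (fps_nth F m * cnj (fps_nth G m) * of_real r ^ (2*m)))" for M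
    using integral_unique[OF iT[of M]] by (simp only: term_eq)
  then have "(\<lambda>M. integral {-pi..pi} (T M)) = (\<lambda>M. \<Sum>m<M. of_real (2*pi) * (fps_nth F m * cnj (fps_nth G m) * of_real r ^ (2*m)))"
    by (rule ext)
  with dc(2) show "(\<lambda>m. of_real (2*pi) * (fps_nth F m * cnj (fps_nth G m) * of_real r ^ (2*m))) sums
          integral {-pi..pi} (\<lambda>t. eval_fps F (of_real r * exp (\<i> * of_real t)) * cnj (eval_fps G (of_real r * exp (\<i> * of_real t))))"
    unfolding sums_def E_def by simp
qed

definition aa :: "nat \<Rightarrow> real" where "aa k = 1 - 1 / 2 ^ Suc k"
definition H :: "real \<Rightarrow> complex fps" where "H a = Abs_fps (\<lambda>m. complex_of_real (a ^ m))"
definition B :: "real \<Rightarrow> complex fps" where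
  "B a = fps_const (complex_of_real a) - fps_const (complex_of_real (1 - a^2)) * (fps_X * H a)"
definition bl :: "real \<Rightarrow> complex \<Rightarrow> complex" where
  "bl a z = (complex_of_real a - z) / (1 - complex_of_real a * z)"
definition Q :: "nat \<Rightarrow> complex fps" where "Q N = fps_X * (\<Prod>k<N. B (aa k))"
definition P :: "nat \<Rightarrow> complex \<Rightarrow> complex" where "P N z = z * (\<Prod>k<N. bl (aa k) z)"

lemma ereal_lt1: "x \<le> 1 \<Longrightarrow> 1 < R \<Longrightarrow> ereal x < R"
proof -
  assume "x \<le> 1" "1 < R"
  then have "ereal x \<le> 1" by (simp add: one_ereal_def)
  then show "ereal x < R" using \<open>1 < R\<close> by (rule order_le_less_trans)
qed

lemma ereal_min_lt: "(x::ereal) < X \<Longrightarrow> x < Y \<Longrightarrow> min X Y \<le> C \<Longrightarrow> x < C"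
proof -
  assume "x < X" "x < Y" "min X Y \<le> C"
  then have "x < min X Y" by simp
  then show "x < C" using \<open>min X Y \<le> C\<close> by (rule order_less_le_trans)
qed

lemma ereal_min1: "1 < X \<Longrightarrow> 1 < Y \<Longrightarrow> min X Y \<le> C \<Longrightarrow> (1::ereal) < C"
  by (rule ereal_min_lt)

lemma aa_bounds: "1/2 \<le> aa k" "aa k < 1" "0 \<le> aa k"
proof -
  have "(2::real) ^ Suc k \<ge> 2" using power_increasing[of 1 "Suc k" "2::real"] by simp
  then have "1 / (2::real) ^ Suc k \<le> 1/2" by (intro divide_left_mono) auto
  then show "1/2 \<le> aa k" by (simp add: aa_def)
  then show "0 \<le> aa k" by simp
  show "aa k < 1" by (simp add: aa_def)
qed

lemma H_rad: assumes "0 \<le> a" "a < 1" shows "1 < fps_conv_radius (H a)"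
proof -
  define \<rho> where "\<rho> = 2 / (1 + a)"
  have \<rho>1: "1 < \<rho>" using assms by (simp add: \<rho>_def field_simps)
  have a\<rho>: "a * \<rho> < 1" "0 \<le> a * \<rho>" using assms by (auto simp: \<rho>_def field_simps)
  have "summable (\<lambda>m. (a * \<rho>) ^ m)" using a\<rho> by (intro summable_geometric) auto
  then have s: "summable (\<lambda>m. complex_of_real ((a * \<rho>) ^ m))" by (rule summable_of_real)
  have eq: "(\<lambda>m. complex_of_real ((a * \<rho>) ^ m)) = (\<lambda>m. fps_nth (H a) m * (complex_of_real \<rho>) ^ m)"
    by (simp add: H_def power_mult_distrib)
  from s have "summable (\<lambda>m. fps_nth (H a) m * (complex_of_real \<rho>) ^ m)" unfolding eq .
  then have "ereal (norm (complex_of_real \<rho>)) \<le> fps_conv_radius (H a)"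
    unfolding fps_conv_radius_def by (rule conv_radius_geI)
  moreover have "norm (complex_of_real \<rho>) = \<rho>" using \<rho>1 by simp
  ultimately have le: "ereal \<rho> \<le> fps_conv_radius (H a)" by simp
  have lt: "(1::ereal) < ereal \<rho>" using \<rho>1 by (simp add: one_ereal_def)
  show ?thesis by (rule order_less_le_trans[OF lt le])
qed

lemma B_rad: assumes "0 \<le> a" "a < 1" shows "1 < fps_conv_radius (B a)"
proof -
  have m1: "fps_conv_radius (fps_X * H a) \<ge> min (fps_conv_radius (fps_X :: complex fps)) (fps_conv_radius (H a))"
    by (rule fps_conv_radius_mult)
  have 1: "1 < fps_conv_radius (fps_X * H a)" by (rule ereal_min1[OF _ H_rad[OF assms] m1]) simp
  have m2: "fps_conv_radius (fps_const (complex_of_real (1 - a^2)) * (fps_X * H a)) \<ge>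
        min (fps_conv_radius (fps_const (complex_of_real (1 - a^2)))) (fps_conv_radius (fps_X * H a))"
    by (rule fps_conv_radius_mult)
  have 2: "1 < fps_conv_radius (fps_const (complex_of_real (1 - a^2)) * (fps_X * H a))"
    by (rule ereal_min1[OF _ 1 m2]) simp
  have m3: "fps_conv_radius (B a) \<ge> min (fps_conv_radius (fps_const (complex_of_real a))) (fps_conv_radius (fps_const (complex_of_real (1 - a^2)) * (fps_X * H a)))"
    unfolding B_def by (rule fps_conv_radius_diff)
  show ?thesis by (rule ereal_min1[OF _ 2 m3]) simp
qed

lemma Q_rad: "1 < fps_conv_radius (Q N)"
proof (induction N)
  case 0 then show ?case by (simp add: Q_def)
next
  case (Suc N)
  have eq: "Q (Suc N) = Q N * B (aa N)" by (simp add: Q_def mult_ac)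
  have m: "fps_conv_radius (Q N * B (aa N)) \<ge> min (fps_conv_radius (Q N)) (fps_conv_radius (B (aa N)))"
    by (rule fps_conv_radius_mult)
  have "1 < fps_conv_radius (Q N * B (aa N))" by (rule ereal_min1[OF Suc.IH B_rad[OF aa_bounds(3,2)] m])
  then show ?case by (simp only: eq)
qed

lemma dQ_rad: "1 < fps_conv_radius (fps_deriv (Q N))"
  by (rule order_less_le_trans[OF Q_rad fps_conv_radius_deriv])

lemma eval_H: assumes "0 \<le> a" "a < 1" "norm z \<le> 1"
  shows "eval_fps (H a) z = 1 / (1 - complex_of_real a * z)"
proof -
  have nz: "norm z < fps_conv_radius (H a)" using assms H_rad[OF assms(1,2)] by (intro ereal_lt1) auto
  have s1: "(\<lambda>m. fps_nth (H a) m * z ^ m) sums eval_fps (H a) z" by (rule sums_eval_fps[OF nz])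
  have "a * norm z \<le> a" using assms by (simp add: mult_left_le)
  then have "norm (complex_of_real a * z) < 1" using assms by (simp add: norm_mult)
  then have "(\<lambda>m. (complex_of_real a * z) ^ m) sums (1 / (1 - complex_of_real a * z))" by (rule geometric_sums)
  moreover have "(\<lambda>m. (complex_of_real a * z) ^ m) = (\<lambda>m. fps_nth (H a) m * z ^ m)"
    by (simp add: H_def power_mult_distrib)
  ultimately have "(\<lambda>m. fps_nth (H a) m * z ^ m) sums (1 / (1 - complex_of_real a * z))" by simp
  then show ?thesis using s1 sums_unique2 by blast
qed

lemma one_minus_az_nz: assumes "0 \<le> a" "a < 1" "norm z \<le> 1" shows "1 - complex_of_real a * z \<noteq> 0"
proof
  assume "1 - complex_of_real a * z = 0"
  then have "complex_of_real a * z = 1" by simp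
  then have "norm (complex_of_real a * z) = 1" by simp
  moreover have "a * norm z \<le> a" using assms by (simp add: mult_left_le)
  moreover have "norm (complex_of_real a * z) < 1" using assms calculation(2) by (simp add: norm_mult)
  ultimately show False by simp
qed

lemma eval_B: assumes "0 \<le> a" "a < 1" "norm z \<le> 1"
  shows "eval_fps (B a) z = bl a z"
proof -
  have nH: "norm z < fps_conv_radius (H a)" using assms H_rad[OF assms(1,2)] by (intro ereal_lt1) auto
  have nXH: "norm z < fps_conv_radius (fps_X * H a)"
    by (rule ereal_min_lt[OF _ nH fps_conv_radius_mult]) simp
  have nC: "norm z < fps_conv_radius (fps_const (complex_of_real (1 - a^2)) * (fps_X * H a))"
    by (rule ereal_min_lt[OF _ nXH fps_conv_radius_mult]) simp
  have d: "1 - complex_of_real a * z \<noteq> 0" by (rule one_minus_az_nz[OF assms])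
  have e1: "eval_fps (B a) z = eval_fps (fps_const (complex_of_real a)) z - eval_fps (fps_const (complex_of_real (1 - a^2)) * (fps_X * H a)) z"
    unfolding B_def by (rule eval_fps_diff[OF _ nC]) simp
  have e2: "eval_fps (fps_const (complex_of_real (1 - a^2)) * (fps_X * H a)) z = eval_fps (fps_const (complex_of_real (1 - a^2))) z * eval_fps (fps_X * H a) z"
    by (rule eval_fps_mult[OF _ nXH]) simp
  have e3: "eval_fps (fps_X * H a) z = eval_fps fps_X z * eval_fps (H a) z"
    by (rule eval_fps_mult[OF _ nH]) simp
  have "eval_fps (B a) z = of_real a - of_real (1 - a^2) * (z * (1 / (1 - complex_of_real a * z)))"
    unfolding e1 e2 e3 eval_H[OF assms] eval_fps_const eval_fps_X by (rule refl)
  also have "\<dots> = (of_real a * (1 - of_real a * z) - of_real (1-a^2) * z) / (1 - of_real a * z)"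
    using d by (simp add: field_simps)
  also have "of_real a * (1 - of_real a * z) - of_real (1-a^2) * z = complex_of_real a - z"
    by (simp add: algebra_simps power2_eq_square)
  finally show ?thesis by (simp add: bl_def)
qed

lemma norm_sq_diff: "(norm (1 - complex_of_real a * z))^2 - (norm (complex_of_real a - z))^2 = (1 - a^2) * (1 - (norm z)^2)"
  unfolding cmod_power2 by (simp add: power2_eq_square algebra_simps)

lemma norm_bl_le: assumes "0 \<le> a" "a < 1" "norm z \<le> 1" shows "norm (bl a z) \<le> 1"
proof -
  have "(norm (complex_of_real a - z))^2 \<le> (norm (1 - complex_of_real a * z))^2"
  proof -
    have "0 \<le> (1 - a^2) * (1 - (norm z)^2)" using assms by (intro mult_nonneg_nonneg) (auto simp: power_le_one abs_square_le_1)
    then show ?thesis using norm_sq_diff[of a z] by linarith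
  qed
  then have "norm (complex_of_real a - z) \<le> norm (1 - complex_of_real a * z)" by (rule power2_le_imp_le) simp
  then show ?thesis using one_minus_az_nz[OF assms] by (simp add: bl_def norm_divide divide_le_eq_1)
qed

lemma norm_bl_eq: assumes "0 \<le> a" "a < 1" "norm z = 1" shows "norm (bl a z) = 1"
proof -
  have "(norm (complex_of_real a - z))^2 = (norm (1 - complex_of_real a * z))^2"
    using norm_sq_diff[of a z] assms by simp
  then have "norm (complex_of_real a - z) = norm (1 - complex_of_real a * z)" by (simp add: power2_eq_iff_nonneg)
  then show ?thesis using one_minus_az_nz[OF assms(1,2)] assms(3) by (simp add: bl_def norm_divide)
qed

lemma eval_Q: assumes "norm z \<le> 1" shows "eval_fps (Q N) z = P N z"
proof (induction N)
  case 0 then show ?case by (simp add: Q_def P_def)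
next
  case (Suc N)
  have "Q (Suc N) = Q N * B (aa N)" by (simp add: Q_def mult_ac)
  moreover have "norm z < fps_conv_radius (Q N)" using assms Q_rad[of N] by (intro ereal_lt1) auto
  moreover have "norm z < fps_conv_radius (B (aa N))" using assms B_rad[OF aa_bounds(3,2)] by (intro ereal_lt1) auto
  ultimately have "eval_fps (Q (Suc N)) z = eval_fps (Q N) z * eval_fps (B (aa N)) z" by (simp add: eval_fps_mult)
  also have "\<dots> = P N z * bl (aa N) z" using Suc eval_B[OF aa_bounds(3,2) assms] by simp
  also have "\<dots> = P (Suc N) z" by (simp add: P_def mult_ac)
  finally show ?case .
qed

lemma P_Suc: "P (Suc N) z = P N z * bl (aa N) z" by (simp add: P_def mult_ac)

lemma norm_P_le: assumes "norm z \<le> 1" shows "norm (P N z) \<le> 1"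
proof (induction N)
  case 0 then show ?case using assms by (simp add: P_def)
next
  case (Suc N)
  have "norm (P (Suc N) z) = norm (P N z) * norm (bl (aa N) z)" by (simp add: P_Suc norm_mult)
  also have "\<dots> \<le> 1" using Suc norm_bl_le[OF aa_bounds(3,2) assms] by (simp add: mult_le_one)
  finally show ?case .
qed

lemma norm_P_eq: assumes "norm z = 1" shows "norm (P N z) = 1"
proof (induction N)
  case 0 then show ?case using assms by (simp add: P_def)
next
  case (Suc N)
  show ?case using Suc norm_bl_eq[OF aa_bounds(3,2) assms] by (simp add: P_Suc norm_mult)
qed

lemma norm_P_mono: assumes "norm z \<le> 1" "M \<le> N" shows "norm (P N z) \<le> norm (P M z)"
  using assms(2)
proof (induction N)
  case 0 then show ?case by simp
next
  case (Suc N)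
  show ?case
  proof (cases "M = Suc N")
    case True then show ?thesis by simp
  next
    case False
    then have "M \<le> N" using Suc by simp
    have "norm (P (Suc N) z) = norm (P N z) * norm (bl (aa N) z)" by (simp add: P_Suc norm_mult)
    also have "\<dots> \<le> norm (P N z)" using norm_bl_le[OF aa_bounds(3,2) assms(1)] by (simp add: mult_left_le)
    finally show ?thesis using Suc.IH[OF \<open>M \<le> N\<close>] by simp
  qed
qed

lemma H_nth [simp]: "fps_nth (H a) m = complex_of_real a ^ m" by (simp add: H_def)

lemma deriv_B: "fps_deriv (B a) = fps_const (- complex_of_real (1 - a^2)) * (H a * H a)"
proof (rule fps_ext)
  fix n
  have HH: "fps_nth (H a * H a) n = of_nat (n+1) * complex_of_real a ^ n"
  proof -
    have "fps_nth (H a * H a) n = (\<Sum>i=0..n. complex_of_real a ^ i * complex_of_real a ^ (n - i))"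
      by (simp add: fps_mult_nth)
    also have "\<dots> = (\<Sum>i=0..n. complex_of_real a ^ n)"
      by (intro sum.cong refl) (simp add: power_add[symmetric])
    finally show ?thesis by simp
  qed
  have b: "fps_nth (B a) (Suc n) = - complex_of_real (1 - a^2) * complex_of_real a ^ n" by (simp add: B_def algebra_simps)
  have l: "fps_nth (fps_deriv (B a)) n = of_nat (n+1) * (- complex_of_real (1 - a^2) * complex_of_real a ^ n)"
    by (simp only: fps_deriv_nth b Suc_eq_plus1[symmetric])
  have r: "fps_nth (fps_const (- complex_of_real (1 - a^2)) * (H a * H a)) n = - complex_of_real (1 - a^2) * (of_nat (n+1) * complex_of_real a ^ n)"
    by (simp only: fps_mult_left_const_nth HH)
  show "fps_nth (fps_deriv (B a)) n = fps_nth (fps_const (- complex_of_real (1 - a^2)) * (H a * H a)) n"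
    unfolding l r by (simp only: mult_ac)
qed

lemma cont_eval_circ:
  fixes F :: "complex fps"
  assumes "1 < fps_conv_radius F" "0 \<le> r" "r \<le> 1"
  shows "continuous_on A (\<lambda>t. eval_fps F (of_real r * exp (\<i> * of_real t)))"
proof (rule continuous_on_eval_fps')
  show "continuous_on A (\<lambda>t. complex_of_real r * exp (\<i> * complex_of_real t))"
    by (intro continuous_intros)
  show "(\<lambda>t. complex_of_real r * exp (\<i> * complex_of_real t)) ` A \<subseteq> eball 0 (fps_conv_radius F)"
  proof
    fix z assume "z \<in> (\<lambda>t. complex_of_real r * exp (\<i> * complex_of_real t)) ` A"
    then obtain t where z: "z = complex_of_real r * exp (\<i> * complex_of_real t)" by blast
    have "dist 0 z = r" using assms(2) by (simp add: z norm_mult)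
    then have "ereal (dist 0 z) < fps_conv_radius F" using assms by (intro ereal_lt1) auto
    then show "z \<in> eball 0 (fps_conv_radius F)" by simp
  qed
qed

lemma int_eval_circ:
  fixes F :: "complex fps"
  assumes "1 < fps_conv_radius F" "0 \<le> r" "r \<le> 1"
  shows "(\<lambda>t. norm (eval_fps F (of_real r * exp (\<i> * of_real t)))) integrable_on {-pi..pi}"
    and "(\<lambda>t. (norm (eval_fps F (of_real r * exp (\<i> * of_real t))))^2) integrable_on {-pi..pi}"
proof -
  have c: "continuous_on {-pi..pi} (\<lambda>t. eval_fps F (of_real r * exp (\<i> * of_real t)))" by (rule cont_eval_circ[OF assms])
  show "(\<lambda>t. norm (eval_fps F (of_real r * exp (\<i> * of_real t)))) integrable_on {-pi..pi}"
    by (rule integrable_continuous_interval) (intro continuous_on_norm c)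
  show "(\<lambda>t. (norm (eval_fps F (of_real r * exp (\<i> * of_real t))))^2) integrable_on {-pi..pi}"
    by (rule integrable_continuous_interval) (intro continuous_on_power continuous_on_norm c)
qed

lemma parseval_norm:
  fixes F :: "complex fps" and r :: real
  assumes r: "0 \<le> r" "ereal r < fps_conv_radius F"
  shows "(\<lambda>m. 2 * pi * ((norm (fps_nth F m))^2 * r ^ (2*m))) sums
          integral {-pi..pi} (\<lambda>t. (norm (eval_fps F (of_real r * exp (\<i> * of_real t))))^2)"
proof -
  define E where "E t = eval_fps F (of_real r * exp (\<i> * of_real t))" for t
  note p = fps_parseval[OF r(1) r(2) r(2)]
  have eq: "(\<lambda>t. eval_fps F (of_real r * exp (\<i> * of_real t)) * cnj (eval_fps F (of_real r * exp (\<i> * of_real t))))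
      = (\<lambda>t. complex_of_real ((norm (E t))^2))"
    unfolding E_def complex_norm_square by (rule refl)
  have int1: "(\<lambda>t. complex_of_real ((norm (E t))^2)) integrable_on {-pi..pi}" using p(1) unfolding eq .
  have s1: "(\<lambda>m. of_real (2*pi) * (fps_nth F m * cnj (fps_nth F m) * of_real r ^ (2*m))) sums
      integral {-pi..pi} (\<lambda>t. complex_of_real ((norm (E t))^2))" using p(2) unfolding eq .
  have sR: "(\<lambda>m. Re (of_real (2*pi) * (fps_nth F m * cnj (fps_nth F m) * of_real r ^ (2*m)))) sums
      Re (integral {-pi..pi} (\<lambda>t. complex_of_real ((norm (E t))^2)))" by (rule sums_Re[OF s1])
  have tm: "Re (of_real (2*pi) * (fps_nth F m * cnj (fps_nth F m) * of_real r ^ (2*m))) = 2 * pi * ((norm (fps_nth F m))^2 * r ^ (2*m))" for m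
  proof -
    have "complex_of_real ((norm (fps_nth F m))^2 * r ^ (2*m)) = complex_of_real ((norm (fps_nth F m))^2) * complex_of_real (r ^ (2*m))"
      by (rule of_real_mult)
    also have "\<dots> = fps_nth F m * cnj (fps_nth F m) * of_real r ^ (2*m)"
      by (subst complex_norm_square) (simp only: of_real_power)
    finally have "fps_nth F m * cnj (fps_nth F m) * of_real r ^ (2*m) = complex_of_real ((norm (fps_nth F m))^2 * r ^ (2*m))" by (rule sym)
    then have "of_real (2*pi) * (fps_nth F m * cnj (fps_nth F m) * of_real r ^ (2*m)) = complex_of_real (2 * pi * ((norm (fps_nth F m))^2 * r ^ (2*m)))"
      by (simp only: of_real_mult)
    then show ?thesis by (simp only: Re_complex_of_real)
  qed
  have ie: "Re (integral {-pi..pi} (\<lambda>t. complex_of_real ((norm (E t))^2))) = integral {-pi..pi} (\<lambda>t. (norm (E t))^2)"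
  proof -
    have "((\<lambda>t. complex_of_real ((norm (E t))^2)) has_integral integral {-pi..pi} (\<lambda>t. complex_of_real ((norm (E t))^2))) {-pi..pi}"
      by (rule integrable_integral[OF int1])
    from has_integral_Re[OF this] have "((\<lambda>t. (norm (E t))^2) has_integral Re (integral {-pi..pi} (\<lambda>t. complex_of_real ((norm (E t))^2)))) {-pi..pi}"
      by simp
    then show ?thesis by (rule integral_unique[symmetric])
  qed
  from sR[unfolded tm ie] show ?thesis unfolding E_def .
qed

lemma rad_gt_mult: "1 < fps_conv_radius (f::complex fps) \<Longrightarrow> 1 < fps_conv_radius g \<Longrightarrow> 1 < fps_conv_radius (f * g)"
  by (rule ereal_min1[OF _ _ fps_conv_radius_mult])

lemma rad_gt_deriv: "1 < fps_conv_radius (f::complex fps) \<Longrightarrow> 1 < fps_conv_radius (fps_deriv f)"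
  by (rule order_less_le_trans[OF _ fps_conv_radius_deriv])

lemma lt_rad: "norm z \<le> 1 \<Longrightarrow> 1 < fps_conv_radius (f::complex fps) \<Longrightarrow> norm z < fps_conv_radius f"
  by (rule ereal_lt1)

lemma eval_dB:
  assumes "0 \<le> a" "a < 1" "norm z \<le> 1"
  shows "norm (eval_fps (fps_deriv (B a)) z) = (1 - a^2) * (norm (eval_fps (H a) z))^2"
proof -
  have rH: "1 < fps_conv_radius (H a)" by (rule H_rad[OF assms(1,2)])
  have "eval_fps (fps_deriv (B a)) z = eval_fps (fps_const (- complex_of_real (1 - a^2))) z * eval_fps (H a * H a) z"
    unfolding deriv_B by (rule eval_fps_mult[OF _ lt_rad[OF assms(3) rad_gt_mult[OF rH rH]]]) simp
  also have "eval_fps (H a * H a) z = eval_fps (H a) z * eval_fps (H a) z"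
    by (rule eval_fps_mult[OF lt_rad[OF assms(3) rH] lt_rad[OF assms(3) rH]])
  finally have e: "eval_fps (fps_deriv (B a)) z = eval_fps (fps_const (- complex_of_real (1 - a^2))) z * (eval_fps (H a) z * eval_fps (H a) z)" .
  have "norm (eval_fps (fps_deriv (B a)) z) = \<bar>1 - a^2\<bar> * (norm (eval_fps (H a) z) * norm (eval_fps (H a) z))"
    unfolding e eval_fps_const norm_mult norm_minus_cancel norm_of_real by (rule refl)
  moreover have "1 - a^2 \<ge> 0" using assms by (simp add: power_le_one abs_square_le_1)
  ultimately show ?thesis by (simp add: power2_eq_square)
qed

lemma int_H_sq:
  assumes "0 \<le> a" "a < 1" "0 \<le> r" "r \<le> 1"
  shows "integral {-pi..pi} (\<lambda>t. (norm (eval_fps (H a) (of_real r * exp (\<i> * of_real t))))^2) = 2 * pi / (1 - a^2 * r^2)"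
proof -
  have rr: "ereal r < fps_conv_radius (H a)" by (rule ereal_lt1[OF assms(4) H_rad[OF assms(1,2)]])
  note s = parseval_norm[OF assms(3) rr]
  have ar: "a^2 * r^2 < 1"
  proof -
    have "a * a \<le> a" using assms by (simp add: mult_left_le)
    then have "a^2 < 1" using assms by (simp add: power2_eq_square)
    moreover have "r^2 \<le> 1" using assms by (simp add: power_le_one)
    then have "a^2 * r^2 \<le> a^2" by (rule mult_left_le) simp
    ultimately show ?thesis by simp
  qed
  have "(\<lambda>m. (a^2 * r^2) ^ m) sums (1 / (1 - a^2 * r^2))" by (rule geometric_sums) (use ar in simp)
  then have "(\<lambda>m. 2 * pi * (a^2 * r^2) ^ m) sums (2 * pi * (1 / (1 - a^2 * r^2)))" by (rule sums_mult)
  moreover have "2 * pi * ((norm (fps_nth (H a) m))^2 * r ^ (2*m)) = 2 * pi * (a^2 * r^2) ^ m" for m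
  proof -
    have pw: "(a ^ m)^2 = (a^2)^m" by (metis power_mult mult.commute)
    show ?thesis using assms by (simp add: norm_power power_mult power_mult_distrib abs_of_nonneg pw)
  qed
  ultimately have "(\<lambda>m. 2 * pi * ((norm (fps_nth (H a) m))^2 * r ^ (2*m))) sums (2 * pi / (1 - a^2 * r^2))" by simp
  then show ?thesis using s sums_unique2 by blast
qed

lemma Q_Suc: "Q (Suc N) = Q N * B (aa N)" by (simp add: Q_def mult_ac)

lemma dQ_int_bound:
  assumes r: "0 \<le> r" "r \<le> 1"
  shows "integral {-pi..pi} (\<lambda>t. norm (eval_fps (fps_deriv (Q N)) (of_real r * exp (\<i> * of_real t))))
         \<le> 2 * pi * (1 + (\<Sum>k<N. (1 - (aa k)^2) / (1 - (aa k)^2 * r^2)))"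
proof (induction N)
  case 0
  have "integral {-pi..pi} (\<lambda>t. norm (eval_fps (fps_deriv (Q 0)) (of_real r * exp (\<i> * of_real t)))) = integral {-pi..pi} (\<lambda>t. 1::real)"
    by (simp add: Q_def)
  also have "\<dots> = 2 * pi" by simp
  finally show ?case by simp
next
  case (Suc N)
  define z where "z t = complex_of_real r * exp (\<i> * of_real t)" for t
  define a where "a = aa N"
  have a: "0 \<le> a" "a < 1" unfolding a_def by (rule aa_bounds)+
  have nz: "norm (z t) \<le> 1" for t using r by (simp add: z_def norm_mult)
  have rQ: "1 < fps_conv_radius (Q N)" by (rule Q_rad)
  have rdQ: "1 < fps_conv_radius (fps_deriv (Q N))" by (rule dQ_rad)
  have rB: "1 < fps_conv_radius (B a)" by (rule B_rad[OF a])
  have rdB: "1 < fps_conv_radius (fps_deriv (B a))" by (rule rad_gt_deriv[OF rB])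
  have deq: "fps_deriv (Q (Suc N)) = fps_deriv (Q N) * B a + Q N * fps_deriv (B a)"
    unfolding Q_Suc a_def by simp
  have ev: "eval_fps (fps_deriv (Q (Suc N))) (z t) = eval_fps (fps_deriv (Q N)) (z t) * eval_fps (B a) (z t) + eval_fps (Q N) (z t) * eval_fps (fps_deriv (B a)) (z t)" for t
  proof -
    have "eval_fps (fps_deriv (Q (Suc N))) (z t) = eval_fps (fps_deriv (Q N) * B a) (z t) + eval_fps (Q N * fps_deriv (B a)) (z t)"
      unfolding deq by (rule eval_fps_add[OF lt_rad[OF nz rad_gt_mult[OF rdQ rB]] lt_rad[OF nz rad_gt_mult[OF rQ rdB]]])
    also have "eval_fps (fps_deriv (Q N) * B a) (z t) = eval_fps (fps_deriv (Q N)) (z t) * eval_fps (B a) (z t)"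
      by (rule eval_fps_mult[OF lt_rad[OF nz rdQ] lt_rad[OF nz rB]])
    also have "eval_fps (Q N * fps_deriv (B a)) (z t) = eval_fps (Q N) (z t) * eval_fps (fps_deriv (B a)) (z t)"
      by (rule eval_fps_mult[OF lt_rad[OF nz rQ] lt_rad[OF nz rdB]])
    finally show ?thesis .
  qed
  have pt: "norm (eval_fps (fps_deriv (Q (Suc N))) (z t)) \<le> norm (eval_fps (fps_deriv (Q N)) (z t)) + (1 - a^2) * (norm (eval_fps (H a) (z t)))^2" for t
  proof -
    have b1: "norm (eval_fps (B a) (z t)) \<le> 1" unfolding eval_B[OF a nz] by (rule norm_bl_le[OF a nz])
    have b2: "norm (eval_fps (Q N) (z t)) \<le> 1" unfolding eval_Q[OF nz] by (rule norm_P_le[OF nz])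
    have "norm (eval_fps (fps_deriv (Q (Suc N))) (z t)) \<le> norm (eval_fps (fps_deriv (Q N)) (z t)) * norm (eval_fps (B a) (z t)) + norm (eval_fps (Q N) (z t)) * norm (eval_fps (fps_deriv (B a)) (z t))"
      unfolding ev by (rule order_trans[OF norm_triangle_ineq]) (simp add: norm_mult)
    also have "\<dots> \<le> norm (eval_fps (fps_deriv (Q N)) (z t)) * 1 + 1 * norm (eval_fps (fps_deriv (B a)) (z t))"
      by (intro add_mono mult_left_mono mult_right_mono b1 b2) auto
    also have "norm (eval_fps (fps_deriv (B a)) (z t)) = (1 - a^2) * (norm (eval_fps (H a) (z t)))^2" by (rule eval_dB[OF a nz])
    finally show ?thesis by simp
  qed
  have i1: "(\<lambda>t. norm (eval_fps (fps_deriv (Q (Suc N))) (z t))) integrable_on {-pi..pi}"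
    unfolding z_def by (rule int_eval_circ(1)[OF dQ_rad r])
  have i2: "(\<lambda>t. norm (eval_fps (fps_deriv (Q N)) (z t))) integrable_on {-pi..pi}"
    unfolding z_def by (rule int_eval_circ(1)[OF dQ_rad r])
  have i3: "(\<lambda>t. (norm (eval_fps (H a) (z t)))^2) integrable_on {-pi..pi}"
    unfolding z_def by (rule int_eval_circ(2)[OF H_rad[OF a] r])
  have i3': "(\<lambda>t. (1 - a^2) * (norm (eval_fps (H a) (z t)))^2) integrable_on {-pi..pi}"
    by (rule integrable_on_mult_right[OF i3])
  have "integral {-pi..pi} (\<lambda>t. norm (eval_fps (fps_deriv (Q (Suc N))) (z t)))
      \<le> integral {-pi..pi} (\<lambda>t. norm (eval_fps (fps_deriv (Q N)) (z t)) + (1 - a^2) * (norm (eval_fps (H a) (z t)))^2)"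
    by (rule integral_le[OF i1 integrable_add[OF i2 i3'] pt])
  also have "\<dots> = integral {-pi..pi} (\<lambda>t. norm (eval_fps (fps_deriv (Q N)) (z t))) + (1 - a^2) * integral {-pi..pi} (\<lambda>t. (norm (eval_fps (H a) (z t)))^2)"
    by (simp add: integral_add[OF i2 i3'] integral_mult_right)
  also have "integral {-pi..pi} (\<lambda>t. (norm (eval_fps (H a) (z t)))^2) = 2 * pi / (1 - a^2 * r^2)"
    unfolding z_def by (rule int_H_sq[OF a r])
  also have "integral {-pi..pi} (\<lambda>t. norm (eval_fps (fps_deriv (Q N)) (z t))) \<le> 2 * pi * (1 + (\<Sum>k<N. (1 - (aa k)^2) / (1 - (aa k)^2 * r^2)))"
    using Suc.IH unfolding z_def .
  finally have "integral {-pi..pi} (\<lambda>t. norm (eval_fps (fps_deriv (Q (Suc N))) (z t)))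
      \<le> 2 * pi * (1 + (\<Sum>k<N. (1 - (aa k)^2) / (1 - (aa k)^2 * r^2))) + (1 - a^2) * (2 * pi / (1 - a^2 * r^2))"
    by simp
  also have "\<dots> = 2 * pi * (1 + (\<Sum>k<Suc N. (1 - (aa k)^2) / (1 - (aa k)^2 * r^2)))"
    by (simp add: a_def algebra_simps)
  finally show ?case unfolding z_def .
qed

lemma coeff_deriv_bound:
  assumes r: "0 \<le> r" "r \<le> 1" and m: "1 \<le> m"
  shows "real m * norm (fps_nth (Q N) m) * r ^ (m - 1) \<le> 1 + (\<Sum>k<N. (1 - (aa k)^2) / (1 - (aa k)^2 * r^2))"
proof -
  define G where "G = fps_deriv (Q N)"
  have rr: "ereal r < fps_conv_radius G" unfolding G_def by (rule ereal_lt1[OF r(2) dQ_rad])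
  have rG: "1 < fps_conv_radius G" unfolding G_def by (rule dQ_rad)
  note fi = fps_fourier[OF r(1) rr, of "int (m - 1)"]
  have nth: "fps_nth G (nat (int (m - 1))) = of_nat m * fps_nth (Q N) m"
    by (simp only: nat_int G_def fps_deriv_nth le_add_diff_inverse2[OF m])
  have I: "((\<lambda>t. eval_fps G (of_real r * exp (\<i> * of_real t)) * exp (- \<i> * of_int (int (m - 1)) * of_real t)) has_integral
      of_real (2*pi) * (of_nat m * fps_nth (Q N) m * of_real r ^ (m - 1))) {-pi..pi}"
    using fi unfolding nth by simp
  have nrm: "norm (eval_fps G (of_real r * exp (\<i> * of_real t)) * exp (- \<i> * of_int (int (m - 1)) * of_real t)) = norm (eval_fps G (of_real r * exp (\<i> * of_real t)))" for t
  proof -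
    have "exp (- \<i> * of_int (int (m - 1)) * complex_of_real t) = exp (\<i> * complex_of_real (- (real (m-1) * t)))" by (simp add: mult.assoc)
    then have "norm (exp (- \<i> * of_int (int (m - 1)) * complex_of_real t)) = 1" by (simp only: norm_exp_i_real)
    then show ?thesis by (simp add: norm_mult)
  qed
  have "norm (integral {-pi..pi} (\<lambda>t. eval_fps G (of_real r * exp (\<i> * of_real t)) * exp (- \<i> * of_int (int (m - 1)) * of_real t)))
       \<le> integral {-pi..pi} (\<lambda>t. norm (eval_fps G (of_real r * exp (\<i> * of_real t))))"
    by (rule integral_norm_bound_integral[OF has_integral_integrable[OF I] int_eval_circ(1)[OF rG r]]) (rule order_eq_refl[OF nrm])
  also have "\<dots> \<le> 2 * pi * (1 + (\<Sum>k<N. (1 - (aa k)^2) / (1 - (aa k)^2 * r^2)))"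
    unfolding G_def by (rule dQ_int_bound[OF r])
  finally have "norm (of_real (2*pi) * (of_nat m * fps_nth (Q N) m * of_real r ^ (m - 1))) \<le> 2 * pi * (1 + (\<Sum>k<N. (1 - (aa k)^2) / (1 - (aa k)^2 * r^2)))"
    using integral_unique[OF I] by simp
  then have "2 * pi * (real m * norm (fps_nth (Q N) m) * r ^ (m - 1)) \<le> 2 * pi * (1 + (\<Sum>k<N. (1 - (aa k)^2) / (1 - (aa k)^2 * r^2)))"
    using r by (simp add: norm_mult norm_power abs_of_nonneg)
  then show ?thesis by (simp add: pi_gt_zero)
qed

lemma aux_frac_bound:
  fixes num den e d \<epsilon> :: real
  assumes "0 \<le> num" "num \<le> 2*e" "0 < e" "0 < d" "e \<le> den" "d \<le> den" "0 < \<epsilon>" "\<epsilon> \<le> 1"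
  shows "num / den \<le> 2 * (e / d) powr \<epsilon>"
proof (cases "1 \<le> e / d")
  case True
  have "num / den \<le> 2 * e / e" using assms by (intro frac_le) auto
  also have "\<dots> = 2" using assms by simp
  also have "2 \<le> 2 * (e / d) powr \<epsilon>" using ge_one_powr_ge_zero[OF True, of \<epsilon>] assms by simp
  finally show ?thesis .
next
  case False
  have "num / den \<le> 2 * e / d" using assms by (intro frac_le) auto
  also have "\<dots> = 2 * (e / d)" by simp
  also have "e / d = (e / d) powr 1" using assms by (simp add: powr_one)
  also have "(e / d) powr 1 \<le> (e / d) powr \<epsilon>" using False assms by (intro powr_mono') auto
  finally show ?thesis by simp
qed

lemma term_bound:
  fixes \<epsilon> :: real and m k :: nat
  assumes eps: "0 < \<epsilon>" "\<epsilon> \<le> 1" and m: "1 \<le> m"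
  shows "(1 - (aa k)^2) / (1 - (aa k)^2 * (1 - 1/(2*real m))^2) \<le> 2 * (2 * real m * (1/2)^(Suc k)) powr \<epsilon>"
proof -
  define e :: real where "e = (1/2)^(Suc k)"
  define r :: real where "r = 1 - 1/(2*real m)"
  define a where "a = aa k"
  have ae: "a = 1 - e" by (simp add: a_def e_def aa_def power_one_over)
  have e0: "0 < e" by (simp add: e_def)
  have e1: "e \<le> 1/2" unfolding e_def using power_decreasing[of 1 "Suc k" "1/2::real"] by simp
  have mpos: "0 < real m" using m by simp
  have r1: "1/2 \<le> r" "r < 1" using m by (auto simp: r_def field_simps)
  have a0: "0 \<le> a" "a < 1" using ae e0 e1 by auto
  have num0: "0 \<le> 1 - a^2" using a0 by (simp add: power_le_one abs_square_le_1)
  have "1 - a^2 = 2 * e - e^2" unfolding ae by (simp add: power2_eq_square algebra_simps)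
  then have num1: "1 - a^2 \<le> 2 * e" by simp
  have ar0: "0 \<le> a * r" "a * r \<le> 1" using a0 r1 by (auto simp: mult_le_one)
  have "(a * r)^2 \<le> a * r" using ar0 by (simp add: power2_eq_square mult_left_le)
  then have den1: "1 - a * r \<le> 1 - a^2 * r^2" by (simp add: power_mult_distrib)
  have "a * r \<le> a" using a0 r1 by (simp add: mult_left_le)
  then have "e \<le> 1 - a * r" using ae by simp
  then have de: "e \<le> 1 - a^2 * r^2" using den1 by simp
  have "a * r \<le> r" using a0 r1 by (simp add: mult_left_le_one_le)
  then have "1/(2*real m) \<le> 1 - a * r" by (simp add: r_def)
  then have dd: "1/(2*real m) \<le> 1 - a^2 * r^2" using den1 by simp
  have "(1 - a^2) / (1 - a^2 * r^2) \<le> 2 * (e / (1/(2*real m))) powr \<epsilon>"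
    by (rule aux_frac_bound[OF num0 num1 e0 _ de dd eps]) (use mpos in simp)
  also have "e / (1/(2*real m)) = 2 * real m * e" by simp
  finally show ?thesis by (simp add: a_def r_def e_def)
qed

lemma sum_term_bound:
  fixes \<epsilon> :: real and m N :: nat
  assumes eps: "0 < \<epsilon>" "\<epsilon> \<le> 1" and m: "1 \<le> m"
  shows "1 + (\<Sum>k<N. (1 - (aa k)^2) / (1 - (aa k)^2 * (1 - 1/(2*real m))^2))
         \<le> (1 + 4 / (1 - (1/2) powr \<epsilon>)) * real m powr \<epsilon>"
proof -
  define q :: real where "q = (1/2) powr \<epsilon>"
  have q0: "0 < q" by (simp add: q_def)
  have q1: "q < 1" unfolding q_def using powr_less_mono2[OF eps(1), of "1/2" 1] by simp
  have ek: "(2 * real m * (1/2)^(Suc k)) powr \<epsilon> = (2 * real m) powr \<epsilon> * q ^ Suc k" for k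
  proof -
    have pp: "((1/2::real)^(Suc k)) = (1/2) powr real (Suc k)" by (rule powr_realpow[symmetric]) simp
    have "((1/2::real)^(Suc k)) powr \<epsilon> = ((1/2) powr real (Suc k)) powr \<epsilon>" by (simp only: pp)
    also have "\<dots> = (1/2) powr (real (Suc k) * \<epsilon>)" by (rule powr_powr)
    also have "\<dots> = q ^ Suc k" unfolding q_def by (rule powr_power[symmetric]) simp
    finally have qq: "((1/2::real)^(Suc k)) powr \<epsilon> = q ^ Suc k" .
    show ?thesis by (simp only: powr_mult qq)
  qed
  have "(\<Sum>k<N. (1 - (aa k)^2) / (1 - (aa k)^2 * (1 - 1/(2*real m))^2)) \<le> (\<Sum>k<N. 2 * ((2 * real m) powr \<epsilon> * q ^ Suc k))"
    by (intro sum_mono) (use term_bound[OF eps m] ek in simp)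
  also have "\<dots> = 2 * (2 * real m) powr \<epsilon> * (\<Sum>k<N. q ^ Suc k)" by (simp add: sum_distrib_left mult_ac)
  also have "(\<Sum>k<N. q ^ Suc k) \<le> (\<Sum>k<N. q ^ k)"
    by (intro sum_mono) (use q0 q1 in \<open>simp add: mult_left_le_one_le\<close>)
  also have "(\<Sum>k<N. q ^ k) \<le> 1 / (1 - q)"
  proof -
    have s: "summable (\<lambda>k. q ^ k)" using q0 q1 by (intro summable_geometric) simp
    have "(\<Sum>k<N. q ^ k) \<le> (\<Sum>k. q ^ k)" by (rule sum_le_suminf[OF s]) (use q0 in auto)
    also have "\<dots> = 1 / (1 - q)" using q0 q1 by (intro suminf_geometric) simp
    finally show ?thesis .
  qed
  finally have S: "(\<Sum>k<N. (1 - (aa k)^2) / (1 - (aa k)^2 * (1 - 1/(2*real m))^2)) \<le> 2 * (2 * real m) powr \<epsilon> * (1 / (1 - q))"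
    using q0 q1 by (simp add: mult_left_mono)
  have "(2 * real m) powr \<epsilon> = 2 powr \<epsilon> * real m powr \<epsilon>" by (rule powr_mult)
  also have "2 powr \<epsilon> \<le> 2" using powr_mono[OF eps(2), of 2] by simp
  finally have t: "(2 * real m) powr \<epsilon> \<le> 2 * real m powr \<epsilon>" by (simp add: mult_right_mono)
  have mge: "1 \<le> real m powr \<epsilon>" using m eps by (intro ge_one_powr_ge_zero) auto
  have "1 + (\<Sum>k<N. (1 - (aa k)^2) / (1 - (aa k)^2 * (1 - 1/(2*real m))^2)) \<le> 1 + 2 * (2 * real m powr \<epsilon>) * (1 / (1 - q))"
    using S t q1 by (smt (verit) divide_pos_pos mult_left_mono mult_right_mono)
  also have "\<dots> \<le> real m powr \<epsilon> + 4 / (1 - q) * real m powr \<epsilon>" using mge q1 by simp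
  also have "\<dots> = (1 + 4 / (1 - q)) * real m powr \<epsilon>" by (simp add: algebra_simps)
  finally show ?thesis by (simp add: q_def)
qed

lemma Q_coeff_bound:
  fixes \<epsilon> :: real
  assumes eps: "0 < \<epsilon>" "\<epsilon> \<le> 1"
  shows "\<exists>K. \<forall>N m. 1 \<le> m \<longrightarrow> norm (fps_nth (Q N) m) \<le> K * real m powr (\<epsilon> - 1)"
proof (intro exI allI impI)
  fix N m :: nat assume m: "1 \<le> m"
  define C where "C = 1 + 4 / (1 - (1/2) powr \<epsilon>)"
  define r :: real where "r = 1 - 1/(2*real m)"
  have mpos: "0 < real m" using m by simp
  have r0: "0 \<le> r" "r \<le> 1" using m by (auto simp: r_def field_simps)
  have "1 + real (m - 1) * (- (1/(2*real m))) \<le> (1 + - (1/(2*real m))) ^ (m - 1)"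
    by (rule Bernoulli_inequality) (use m in \<open>simp add: field_simps\<close>)
  moreover have "1/2 \<le> 1 + real (m - 1) * (- (1/(2*real m)))"
    using m by (simp add: of_nat_diff field_simps)
  ultimately have rp: "1/2 \<le> r ^ (m - 1)" by (simp add: r_def)
  have "real m * norm (fps_nth (Q N) m) * r ^ (m - 1) \<le> 1 + (\<Sum>k<N. (1 - (aa k)^2) / (1 - (aa k)^2 * r^2))"
    by (rule coeff_deriv_bound[OF r0 m])
  also have "\<dots> \<le> C * real m powr \<epsilon>" unfolding r_def C_def by (rule sum_term_bound[OF eps m])
  finally have A: "real m * norm (fps_nth (Q N) m) * r ^ (m - 1) \<le> C * real m powr \<epsilon>" .
  have "real m * norm (fps_nth (Q N) m) * (1/2) \<le> real m * norm (fps_nth (Q N) m) * r ^ (m - 1)"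
    by (intro mult_left_mono rp) auto
  with A have "real m * norm (fps_nth (Q N) m) \<le> 2 * C * real m powr \<epsilon>" by simp
  then have "norm (fps_nth (Q N) m) \<le> 2 * C * real m powr \<epsilon> / real m" using mpos by (simp add: field_simps)
  also have "2 * C * real m powr \<epsilon> / real m = 2 * C * real m powr (\<epsilon> - 1)" using mpos by (simp add: powr_diff)
  finally show "norm (fps_nth (Q N) m) \<le> (2 * C) * real m powr (\<epsilon> - 1)" by (simp add: mult.assoc)
qed

lemma unit_circ_eval: "norm (complex_of_real 1 * exp (\<i> * complex_of_real t)) = 1" by simp

lemma sum_sq_Q: "(\<lambda>m. (norm (fps_nth (Q N) m))^2) sums 1"
proof -
  have r1: "ereal 1 < fps_conv_radius (Q N)" using Q_rad by (simp add: one_ereal_def)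
  note s = parseval_norm[OF _ r1, simplified]
  have "integral {-pi..pi} (\<lambda>t. (norm (eval_fps (Q N) (exp (\<i> * of_real t))))^2) = integral {-pi..pi} (\<lambda>t. 1::real)"
  proof (rule integral_cong)
    fix t
    have n1: "norm (exp (\<i> * complex_of_real t)) = 1" by simp
    show "(norm (eval_fps (Q N) (exp (\<i> * of_real t))))^2 = 1"
      using eval_Q[of "exp (\<i> * complex_of_real t)" N] norm_P_eq[OF n1, of N] n1 by simp
  qed
  also have "\<dots> = 2 * pi" by simp
  finally have "(\<lambda>m. 2 * pi * (norm (fps_nth (Q N) m))^2) sums (2 * pi)" using s by simp
  then have "(\<lambda>m. (1 / (2*pi)) * (2 * pi * (norm (fps_nth (Q N) m))^2)) sums ((1 / (2*pi)) * (2 * pi))"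
    by (rule sums_mult)
  then show ?thesis by simp
qed

lemma deriv_Q_Suc: "fps_deriv (Q (Suc N)) = fps_deriv (Q N) * B (aa N) + Q N * fps_deriv (B (aa N))"
  unfolding Q_Suc by simp

lemma eval_dB_eq:
  assumes "0 \<le> a" "a < 1" "norm z \<le> 1"
  shows "eval_fps (fps_deriv (B a)) z = - complex_of_real (1 - a^2) * (eval_fps (H a) z * eval_fps (H a) z)"
proof -
  have rH: "1 < fps_conv_radius (H a)" by (rule H_rad[OF assms(1,2)])
  have "eval_fps (fps_deriv (B a)) z = eval_fps (fps_const (- complex_of_real (1 - a^2))) z * eval_fps (H a * H a) z"
    unfolding deriv_B by (rule eval_fps_mult[OF _ lt_rad[OF assms(3) rad_gt_mult[OF rH rH]]]) simp
  also have "eval_fps (H a * H a) z = eval_fps (H a) z * eval_fps (H a) z"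
    by (rule eval_fps_mult[OF lt_rad[OF assms(3) rH] lt_rad[OF assms(3) rH]])
  finally show ?thesis by (simp only: eval_fps_const)
qed

lemma zBB:
  assumes a: "0 \<le> a" "a < 1" and z: "norm z = 1"
  shows "z * eval_fps (fps_deriv (B a)) z * cnj (eval_fps (B a) z) = complex_of_real ((1 - a^2) * (norm (eval_fps (H a) z))^2)"
proof -
  have z1: "norm z \<le> 1" using z by simp
  define h where "h = eval_fps (H a) z"
  define c where "c = complex_of_real (1 - a^2)"
  have hd: "h = 1 / (1 - complex_of_real a * z)" unfolding h_def by (rule eval_H[OF a z1])
  have nz: "1 - complex_of_real a * z \<noteq> 0" by (rule one_minus_az_nz[OF a z1])
  have h1: "h * (1 - complex_of_real a * z) = 1" using nz by (simp add: hd)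
  have zz: "z * cnj z = 1" using z by (simp add: complex_norm_square[symmetric])
  have eB: "eval_fps (B a) z = (complex_of_real a - z) * h" unfolding eval_B[OF a z1] bl_def hd by simp
  have eD: "eval_fps (fps_deriv (B a)) z = - c * (h * h)" unfolding c_def h_def by (rule eval_dB_eq[OF a z1])
  have "z * eval_fps (fps_deriv (B a)) z * cnj (eval_fps (B a) z) = z * (- c * (h * h)) * ((complex_of_real a - cnj z) * cnj h)"
    unfolding eD eB by simp
  also have "\<dots> = c * (h * cnj h) * (h * (z * cnj z - complex_of_real a * z))" by (simp add: algebra_simps)
  also have "z * cnj z - complex_of_real a * z = 1 - complex_of_real a * z" by (simp only: zz)
  also have "c * (h * cnj h) * (h * (1 - complex_of_real a * z)) = c * (h * cnj h)" by (simp only: h1 mult_1_right)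
  also have "\<dots> = complex_of_real ((1 - a^2) * (norm h)^2)" by (simp only: c_def of_real_mult complex_norm_square)
  finally show ?thesis unfolding h_def .
qed

lemma deg_pt:
  assumes z: "norm z = 1"
  shows "z * eval_fps (fps_deriv (Q N)) z * cnj (eval_fps (Q N) z) = complex_of_real (1 + (\<Sum>k<N. (1 - (aa k)^2) * (norm (eval_fps (H (aa k)) z))^2))"
proof (induction N)
  case 0
  have "z * cnj z = 1" using z by (simp add: complex_norm_square[symmetric])
  then show ?case by (simp add: Q_def)
next
  case (Suc N)
  define a where "a = aa N"
  have a: "0 \<le> a" "a < 1" unfolding a_def by (rule aa_bounds)+
  have z1: "norm z \<le> 1" using z by simp
  have rQ: "1 < fps_conv_radius (Q N)" by (rule Q_rad)
  have rdQ: "1 < fps_conv_radius (fps_deriv (Q N))" by (rule dQ_rad)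
  have rB: "1 < fps_conv_radius (B a)" by (rule B_rad[OF a])
  have rdB: "1 < fps_conv_radius (fps_deriv (B a))" by (rule rad_gt_deriv[OF rB])
  define q where "q = eval_fps (Q N) z"
  define dq where "dq = eval_fps (fps_deriv (Q N)) z"
  define b where "b = eval_fps (B a) z"
  define db where "db = eval_fps (fps_deriv (B a)) z"
  have ev: "eval_fps (fps_deriv (Q (Suc N))) z = dq * b + q * db"
  proof -
    have "eval_fps (fps_deriv (Q (Suc N))) z = eval_fps (fps_deriv (Q N) * B a) z + eval_fps (Q N * fps_deriv (B a)) z"
      unfolding deriv_Q_Suc a_def[symmetric] by (rule eval_fps_add[OF lt_rad[OF z1 rad_gt_mult[OF rdQ rB]] lt_rad[OF z1 rad_gt_mult[OF rQ rdB]]])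
    also have "eval_fps (fps_deriv (Q N) * B a) z = dq * b"
      unfolding dq_def b_def by (rule eval_fps_mult[OF lt_rad[OF z1 rdQ] lt_rad[OF z1 rB]])
    also have "eval_fps (Q N * fps_deriv (B a)) z = q * db"
      unfolding q_def db_def by (rule eval_fps_mult[OF lt_rad[OF z1 rQ] lt_rad[OF z1 rdB]])
    finally show ?thesis .
  qed
  have evQ: "eval_fps (Q (Suc N)) z = q * b"
    unfolding Q_Suc a_def[symmetric] q_def b_def by (rule eval_fps_mult[OF lt_rad[OF z1 rQ] lt_rad[OF z1 rB]])
  have nb: "b * cnj b = 1"
  proof -
    have "norm b = 1" unfolding b_def eval_B[OF a z1] by (rule norm_bl_eq[OF a z])
    then show ?thesis by (simp add: complex_norm_square[symmetric])
  qed
  have nq: "q * cnj q = 1"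
  proof -
    have "norm q = 1" unfolding q_def eval_Q[OF z1] by (rule norm_P_eq[OF z])
    then show ?thesis by (simp add: complex_norm_square[symmetric])
  qed
  have IH: "z * dq * cnj q = complex_of_real (1 + (\<Sum>k<N. (1 - (aa k)^2) * (norm (eval_fps (H (aa k)) z))^2))"
    unfolding dq_def q_def by (rule Suc.IH)
  have zb: "z * db * cnj b = complex_of_real ((1 - a^2) * (norm (eval_fps (H a) z))^2)"
    unfolding db_def b_def by (rule zBB[OF a z])
  have "z * eval_fps (fps_deriv (Q (Suc N))) z * cnj (eval_fps (Q (Suc N)) z) = (z * dq * cnj q) * (b * cnj b) + (q * cnj q) * (z * db * cnj b)"
    unfolding ev evQ by (simp add: algebra_simps)
  also have "\<dots> = (z * dq * cnj q) + (z * db * cnj b)" by (simp only: nb nq mult_1_right mult_1_left)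
  also have "\<dots> = complex_of_real (1 + (\<Sum>k<Suc N. (1 - (aa k)^2) * (norm (eval_fps (H (aa k)) z))^2))"
    unfolding IH zb by (simp add: a_def)
  finally show ?case .
qed

lemma H_sq_has_integral:
  assumes "0 \<le> a" "a < 1"
  shows "((\<lambda>t. (1 - a^2) * (norm (eval_fps (H a) (exp (\<i> * of_real t))))^2) has_integral 2 * pi) {-pi..pi}"
proof -
  have i: "(\<lambda>t. (norm (eval_fps (H a) (complex_of_real 1 * exp (\<i> * of_real t))))^2) integrable_on {-pi..pi}"
    by (rule int_eval_circ(2)[OF H_rad[OF assms]]) simp_all
  have v: "integral {-pi..pi} (\<lambda>t. (norm (eval_fps (H a) (complex_of_real 1 * exp (\<i> * of_real t))))^2) = 2 * pi / (1 - a^2 * 1^2)"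
    by (rule int_H_sq[OF assms]) simp_all
  have "((\<lambda>t. (norm (eval_fps (H a) (complex_of_real 1 * exp (\<i> * of_real t))))^2) has_integral 2 * pi / (1 - a^2)) {-pi..pi}"
    using integrable_integral[OF i] v by simp
  then have "((\<lambda>t. (1 - a^2) * (norm (eval_fps (H a) (complex_of_real 1 * exp (\<i> * of_real t))))^2) has_integral (1 - a^2) * (2 * pi / (1 - a^2))) {-pi..pi}"
    by (rule has_integral_mult_right)
  moreover have "1 - a^2 \<noteq> 0"
  proof -
    have "a * a \<le> a" using assms by (simp add: mult_left_le)
    then show ?thesis using assms by (simp add: power2_eq_square)
  qed
  ultimately show ?thesis by simp
qed

lemma deg_Q: "(\<lambda>m. real m * (norm (fps_nth (Q N) m))^2) sums (real N + 1)"
proof -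
  define F where "F = fps_X * fps_deriv (Q N)"
  have rF: "1 < fps_conv_radius F" unfolding F_def by (rule rad_gt_mult[OF _ dQ_rad]) simp
  have r1F: "ereal 1 < fps_conv_radius F" using rF by (simp add: one_ereal_def)
  have r1Q: "ereal 1 < fps_conv_radius (Q N)" using Q_rad by (simp add: one_ereal_def)
  note p = fps_parseval(2)[OF _ r1F r1Q, simplified]
  define \<phi> where "\<phi> t = 1 + (\<Sum>k<N. (1 - (aa k)^2) * (norm (eval_fps (H (aa k)) (exp (\<i> * of_real t))))^2)" for t
  have pt: "eval_fps F (exp (\<i> * of_real t)) * cnj (eval_fps (Q N) (exp (\<i> * of_real t))) = complex_of_real (\<phi> t)" for t
  proof -
    define z where "z = exp (\<i> * complex_of_real t)"
    have z: "norm z = 1" by (simp add: z_def)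
    have "eval_fps F z = eval_fps fps_X z * eval_fps (fps_deriv (Q N)) z"
      unfolding F_def by (rule eval_fps_mult[OF _ lt_rad[OF _ dQ_rad]]) (simp_all add: z)
    then have "eval_fps F z * cnj (eval_fps (Q N) z) = z * eval_fps (fps_deriv (Q N)) z * cnj (eval_fps (Q N) z)" by simp
    also have "\<dots> = complex_of_real (\<phi> t)" unfolding \<phi>_def z_def by (rule deg_pt) simp
    finally show ?thesis unfolding z_def .
  qed
  have ip: "(\<phi> has_integral 2 * pi * (real N + 1)) {-pi..pi}"
  proof -
    have "((\<lambda>t. 1::real) has_integral 2 * pi) {-pi..pi}"
      using has_integral_const_real[of "1::real" "-pi" pi] pi_gt_zero by simp
    moreover have "((\<lambda>t. \<Sum>k<N. (1 - (aa k)^2) * (norm (eval_fps (H (aa k)) (exp (\<i> * of_real t))))^2) has_integral (\<Sum>k<N. 2 * pi)) {-pi..pi}"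
      by (rule has_integral_sum) (auto intro: H_sq_has_integral aa_bounds)
    ultimately have "(\<phi> has_integral (2 * pi + (\<Sum>k<N. 2 * pi))) {-pi..pi}"
      unfolding \<phi>_def[abs_def] by (rule has_integral_add)
    then show ?thesis by (simp add: algebra_simps)
  qed
  have "integral {-pi..pi} (\<lambda>t. eval_fps F (exp (\<i> * of_real t)) * cnj (eval_fps (Q N) (exp (\<i> * of_real t))))
      = integral {-pi..pi} (\<lambda>t. complex_of_real (\<phi> t))" by (simp only: pt)
  also have "\<dots> = complex_of_real (2 * pi * (real N + 1))"
    by (rule integral_unique[OF has_integral_of_real[OF ip]])
  finally have I: "integral {-pi..pi} (\<lambda>t. eval_fps F (exp (\<i> * of_real t)) * cnj (eval_fps (Q N) (exp (\<i> * of_real t)))) = complex_of_real (2 * pi * (real N + 1))" .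
  have tm: "2 * complex_of_real pi * (fps_nth F m * cnj (fps_nth (Q N) m)) = complex_of_real (2 * pi * (real m * (norm (fps_nth (Q N) m))^2))" for m
  proof (cases m)
    case 0 then show ?thesis by (simp add: F_def)
  next
    case (Suc j)
    have "fps_nth F m = of_nat m * fps_nth (Q N) m" by (simp add: F_def Suc)
    then have "fps_nth F m * cnj (fps_nth (Q N) m) = of_nat m * (fps_nth (Q N) m * cnj (fps_nth (Q N) m))" by simp
    also have "\<dots> = complex_of_real (real m * (norm (fps_nth (Q N) m))^2)" by (simp only: complex_norm_square of_real_mult of_real_of_nat_eq)
    finally show ?thesis by (simp only: of_real_mult of_real_numeral mult.assoc)
  qed
  have "(\<lambda>m. complex_of_real (2 * pi * (real m * (norm (fps_nth (Q N) m))^2))) sums complex_of_real (2 * pi * (real N + 1))"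
    using p unfolding I tm .
  then have "(\<lambda>m. 2 * pi * (real m * (norm (fps_nth (Q N) m))^2)) sums (2 * pi * (real N + 1))"
    by (simp only: sums_of_real_iff)
  then have "(\<lambda>m. (1/(2*pi)) * (2 * pi * (real m * (norm (fps_nth (Q N) m))^2))) sums ((1/(2*pi)) * (2 * pi * (real N + 1)))"
    by (rule sums_mult)
  then show ?thesis by simp
qed

definition Pm :: "nat \<Rightarrow> complex \<Rightarrow> complex" where "Pm N z = (if z = 1 then 1 else P N z)"
definition gb :: "complex \<Rightarrow> complex" where "gb z = lim (\<lambda>N. Pm N z)"

lemma norm_1_az_sq:
  assumes "norm z = 1"
  shows "(norm (1 - complex_of_real a * z))^2 = a * (norm (1 - z))^2 + (1 - a)^2"
proof -
  have h: "(Re z)^2 + (Im z)^2 = 1" using assms by (simp add: cmod_power2[symmetric])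
  have h': "Im z * Im z + Re z * Re z = 1" using h by (simp add: power2_eq_square add.commute)
  have key: "a*(a*(Im z*Im z)) + a*(a*(Re z*Re z)) = a*a"
  proof -
    have "a*(a*(Im z*Im z)) + a*(a*(Re z*Re z)) = (a*a)*(Im z*Im z + Re z*Re z)" by (simp add: algebra_simps)
    also have "\<dots> = a * a" by (simp only: h' mult_1_right)
    finally show ?thesis .
  qed
  have key2: "a*(Im z*Im z) + a*(Re z*Re z) = a"
  proof -
    have "a*(Im z*Im z) + a*(Re z*Re z) = a*(Im z*Im z + Re z*Re z)" by (simp add: algebra_simps)
    also have "\<dots> = a" by (simp only: h' mult_1_right)
    finally show ?thesis .
  qed
  show ?thesis unfolding cmod_power2 using key key2 by (simp add: power2_eq_square algebra_simps)
qed

lemma norm_1_az_ge: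
  assumes "norm z = 1" "1/4 \<le> a"
  shows "norm (1 - z) / 2 \<le> norm (1 - complex_of_real a * z)"
proof -
  have "(norm (1 - z) / 2)^2 = (1/4) * (norm (1 - z))^2" by (simp add: power2_eq_square)
  also have "\<dots> \<le> a * (norm (1 - z))^2" using assms by (intro mult_right_mono) auto
  also have "\<dots> \<le> (norm (1 - complex_of_real a * z))^2" using norm_1_az_sq[OF assms(1), of a] by simp
  finally show ?thesis by (rule power2_le_imp_le) simp
qed

lemma bl_minus_1_bound:
  assumes z: "norm z = 1" "z \<noteq> 1" and a: "1/2 \<le> a" "a < 1"
  shows "norm (bl a z - 1) \<le> 4 * (1 - a) / norm (1 - z)"
proof -
  have z1: "norm z \<le> 1" using z by simp
  have a0: "0 \<le> a" using a by simp
  have nz: "1 - complex_of_real a * z \<noteq> 0" by (rule one_minus_az_nz[OF a0 a(2) z1])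
  have nz1: "0 < norm (1 - z)" using z by simp
  have "bl a z - 1 = - (complex_of_real (1 - a) * (1 + z)) / (1 - complex_of_real a * z)"
    using nz by (simp add: bl_def field_simps)
  have n1a: "norm (1 - complex_of_real a) = 1 - a"
  proof -
    have "1 - complex_of_real a = complex_of_real (1 - a)" by simp
    then have "norm (1 - complex_of_real a) = norm (complex_of_real (1 - a))" by (rule arg_cong)
    also have "\<dots> = \<bar>1 - a\<bar>" by (rule norm_of_real)
    finally show ?thesis using a by simp
  qed
  then have "norm (bl a z - 1) = (1 - a) * norm (1 + z) / norm (1 - complex_of_real a * z)"
    using a \<open>bl a z - 1 = _\<close> by (simp add: norm_mult norm_divide)
  also have "\<dots> \<le> (1 - a) * 2 / (norm (1 - z) / 2)"
  proof (rule frac_le)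
    show "0 \<le> (1 - a) * 2" using a by simp
    have "norm (1 + z) \<le> 2" using norm_triangle_ineq[of 1 z] z by simp
    then show "(1 - a) * norm (1 + z) \<le> (1 - a) * 2" using a by (intro mult_left_mono) auto
    show "0 < norm (1 - z) / 2" using nz1 by simp
    show "norm (1 - z) / 2 \<le> norm (1 - complex_of_real a * z)" by (rule norm_1_az_ge[OF z(1)]) (use a in simp)
  qed
  also have "\<dots> = 4 * (1 - a) / norm (1 - z)" by simp
  finally show ?thesis .
qed

lemma aa_1: "1 - aa k = (1/2) ^ Suc k" by (simp add: aa_def power_one_over)

lemma P_conv:
  assumes z: "norm z = 1"
  shows "(\<lambda>N. Pm N z) \<longlonglongrightarrow> gb z"
proof (cases "z = 1")
  case True
  then have "(\<lambda>N. Pm N z) = (\<lambda>N. 1)" by (simp add: Pm_def)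
  then have "convergent (\<lambda>N. Pm N z)" by (simp add: convergent_const)
  then show ?thesis unfolding gb_def by (rule convergent_LIMSEQ_iff[THEN iffD1])
next
  case False
  have nz1: "0 < norm (1 - z)" using False by simp
  have sm: "summable (\<lambda>k. norm (bl (aa k) z - 1))"
  proof (rule summable_comparison_test)
    show "\<exists>N. \<forall>n\<ge>N. norm (norm (bl (aa n) z - 1)) \<le> 4 / norm (1 - z) * (1/2) ^ Suc n"
      using bl_minus_1_bound[OF z False aa_bounds(1,2)] by (simp add: aa_1 mult.commute)
    show "summable (\<lambda>n. 4 / norm (1 - z) * (1/2::real) ^ Suc n)"
      by (intro summable_mult summable_geometric_iff[THEN iffD2] summable_Suc_iff[THEN iffD2]) simp
  qed
  have "abs_convergent_prod (\<lambda>k. bl (aa k) z)" by (rule summable_imp_abs_convergent_prod[OF sm])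
  then have "convergent_prod (\<lambda>k. bl (aa k) z)" by (rule abs_convergent_prod_imp_convergent_prod)
  then have "(\<lambda>k. bl (aa k) z) has_prod prodinf (\<lambda>k. bl (aa k) z)" by (rule convergent_prod_has_prod)
  then have "(\<lambda>N. \<Prod>k<N. bl (aa k) z) \<longlonglongrightarrow> prodinf (\<lambda>k. bl (aa k) z)" by (rule has_prod_imp_tendsto')
  then have "(\<lambda>N. z * (\<Prod>k<N. bl (aa k) z)) \<longlonglongrightarrow> z * prodinf (\<lambda>k. bl (aa k) z)" by (intro tendsto_mult tendsto_const)
  moreover have "(\<lambda>N. Pm N z) = (\<lambda>N. z * (\<Prod>k<N. bl (aa k) z))" using False by (simp add: Pm_def P_def)
  ultimately have "(\<lambda>N. Pm N z) \<longlonglongrightarrow> z * prodinf (\<lambda>k. bl (aa k) z)" by simp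
  then have "convergent (\<lambda>N. Pm N z)" by (rule convergentI)
  then show ?thesis unfolding gb_def by (rule convergent_LIMSEQ_iff[THEN iffD1])
qed

lemma norm_Pm: "norm z = 1 \<Longrightarrow> norm (Pm N z) = 1"
  by (simp add: Pm_def norm_P_eq)

lemma norm_gb: assumes "norm z = 1" shows "norm (gb z) = 1"
proof -
  have "(\<lambda>N. norm (Pm N z)) \<longlonglongrightarrow> norm (gb z)" by (rule tendsto_norm[OF P_conv[OF assms]])
  moreover have "(\<lambda>N. norm (Pm N z)) = (\<lambda>N. 1)" using norm_Pm[OF assms] by simp
  ultimately show ?thesis using LIMSEQ_unique tendsto_const by metis
qed

lemma exp_i_eq_1:
  assumes "t \<in> {-pi..pi}" "exp (\<i> * complex_of_real t) = 1"
  shows "t = 0"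
proof -
  from assms(2) obtain k :: int where k: "t = of_int (2 * k) * pi" by (auto simp: exp_eq_1)
  have "\<bar>t\<bar> \<le> pi" using assms(1) by auto
  then have "\<bar>of_int (2 * k) * pi\<bar> \<le> pi" by (simp only: k)
  then have "\<bar>real_of_int (2 * k)\<bar> * pi \<le> 1 * pi" by (simp add: abs_mult)
  then have "\<bar>real_of_int (2 * k)\<bar> \<le> 1" using pi_gt_zero by (simp only: mult_le_cancel_right)
  then have "k = 0" by linarith
  then show ?thesis using k by simp
qed

lemma gb_fourier:
  fixes n :: int
  shows "(\<lambda>t. gb (exp (\<i> * of_real t)) * exp (- \<i> * of_int n * of_real t)) integrable_on {-pi..pi}"
    and "(\<lambda>N. of_real (2*pi) * (if n \<ge> 0 then fps_nth (Q N) (nat n) else 0)) \<longlonglongrightarrow>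
          integral {-pi..pi} (\<lambda>t. gb (exp (\<i> * of_real t)) * exp (- \<i> * of_int n * of_real t))"
proof -
  define f where "f N t = Pm N (exp (\<i> * of_real t)) * exp (- \<i> * of_int n * of_real t)" for N t
  have r1: "ereal 1 < fps_conv_radius (Q N)" for N using Q_rad by (simp add: one_ereal_def)
  have hf: "(f N has_integral of_real (2*pi) * (if n \<ge> 0 then fps_nth (Q N) (nat n) else 0)) {-pi..pi}" for N
  proof -
    have "((\<lambda>t. eval_fps (Q N) (of_real 1 * exp (\<i> * of_real t)) * exp (- \<i> * of_int n * of_real t)) has_integral
           (of_real (2*pi) * (if n \<ge> 0 then fps_nth (Q N) (nat n) * of_real 1 ^ nat n else 0))) {-pi..pi}"
      by (rule fps_fourier[OF _ r1]) simp
    moreover have "(\<lambda>t. eval_fps (Q N) (of_real 1 * exp (\<i> * of_real t)) * exp (- \<i> * of_int n * of_real t))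
        = (\<lambda>t. P N (exp (\<i> * of_real t)) * exp (- \<i> * of_int n * of_real t))"
      by (rule ext) (simp add: eval_Q)
    ultimately have h0: "((\<lambda>t. P N (exp (\<i> * of_real t)) * exp (- \<i> * of_int n * of_real t)) has_integral
           (of_real (2*pi) * (if n \<ge> 0 then fps_nth (Q N) (nat n) else 0))) {-pi..pi}"
      by (simp only: of_real_1 power_one mult_1_right)
    show ?thesis
    proof (rule has_integral_spike_finite[OF _ _ h0])
      show "finite {0::real}" by simp
      fix t assume t: "t \<in> {-pi..pi} - {0}"
      then have "exp (\<i> * complex_of_real t) \<noteq> 1" using exp_i_eq_1[of t] by auto
      then show "f N t = P N (exp (\<i> * of_real t)) * exp (- \<i> * of_int n * of_real t)"
        by (simp add: f_def Pm_def)
    qed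
  qed
  have nexp: "norm (exp (- \<i> * of_int n * complex_of_real t)) = 1" for t
  proof -
    have "exp (- \<i> * of_int n * complex_of_real t) = exp (\<i> * complex_of_real (- (real_of_int n * t)))" by (simp add: mult.assoc)
    then show ?thesis by (simp only: norm_exp_i_real)
  qed
  have bnd: "norm (f N t) \<le> 1" if "t \<in> {-pi..pi}" for N t
    unfolding f_def norm_mult nexp by (simp add: norm_Pm)
  have conv: "(\<lambda>N. f N t) \<longlonglongrightarrow> gb (exp (\<i> * of_real t)) * exp (- \<i> * of_int n * of_real t)" if "t \<in> {-pi..pi}" for t
    unfolding f_def by (intro tendsto_mult tendsto_const P_conv) simp
  have intf: "f N integrable_on {-pi..pi}" for N using hf by blast
  have int1: "(\<lambda>t. 1::real) integrable_on {-pi..pi}" by (intro integrable_continuous_interval continuous_intros)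
  note dc = dominated_convergence[OF intf int1 bnd conv]
  show "(\<lambda>t. gb (exp (\<i> * of_real t)) * exp (- \<i> * of_int n * of_real t)) integrable_on {-pi..pi}" by (rule dc(1))
  have "(\<lambda>N. integral {-pi..pi} (f N)) = (\<lambda>N. of_real (2*pi) * (if n \<ge> 0 then fps_nth (Q N) (nat n) else 0))"
    by (rule ext) (rule integral_unique[OF hf])
  with dc(2) show "(\<lambda>N. of_real (2*pi) * (if n \<ge> 0 then fps_nth (Q N) (nat n) else 0)) \<longlonglongrightarrow>
          integral {-pi..pi} (\<lambda>t. gb (exp (\<i> * of_real t)) * exp (- \<i> * of_int n * of_real t))" by simp
qed

definition cg :: "nat \<Rightarrow> complex" where
  "cg m = integral {-pi..pi} (\<lambda>t. gb (exp (\<i> * of_real t)) * exp (- \<i> * of_int (int m) * of_real t)) / of_real (2*pi)"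

lemma Q_lim: "(\<lambda>N. fps_nth (Q N) m) \<longlonglongrightarrow> cg m"
proof -
  have "(\<lambda>N. of_real (2*pi) * fps_nth (Q N) m) \<longlonglongrightarrow>
          integral {-pi..pi} (\<lambda>t. gb (exp (\<i> * of_real t)) * exp (- \<i> * of_int (int m) * of_real t))"
    using gb_fourier(2)[of "int m"] by simp
  then have "(\<lambda>N. (of_real (2*pi) * fps_nth (Q N) m) / of_real (2*pi)) \<longlonglongrightarrow>
          integral {-pi..pi} (\<lambda>t. gb (exp (\<i> * of_real t)) * exp (- \<i> * of_int (int m) * of_real t)) / of_real (2*pi)"
    by (rule tendsto_divide[OF _ tendsto_const]) simp
  then show ?thesis unfolding cg_def by simp
qed

lemma Q_nth_0: "fps_nth (Q N) 0 = 0" by (simp add: Q_def)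

lemma cg_0: "cg 0 = 0"
proof -
  have "(\<lambda>N. fps_nth (Q N) 0) \<longlonglongrightarrow> 0" by (simp add: Q_nth_0)
  then show ?thesis using Q_lim[of 0] LIMSEQ_unique by blast
qed

lemma gb_fourier_neg:
  fixes n :: int assumes "n < 0"
  shows "integral {-pi..pi} (\<lambda>t. gb (exp (\<i> * of_real t)) * exp (- \<i> * of_int n * of_real t)) = 0"
proof -
  have "(\<lambda>N. of_real (2*pi) * (if n \<ge> 0 then fps_nth (Q N) (nat n) else 0)) = (\<lambda>N. 0)" using assms by simp
  then have "(\<lambda>N. (0::complex)) \<longlonglongrightarrow> integral {-pi..pi} (\<lambda>t. gb (exp (\<i> * of_real t)) * exp (- \<i> * of_int n * of_real t))"
    using gb_fourier(2)[of n] by simp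
  then show ?thesis using LIMSEQ_unique tendsto_const by metis
qed

lemma cg_bound:
  fixes \<epsilon> :: real
  assumes "0 < \<epsilon>" "\<epsilon> \<le> 1"
  shows "\<exists>K. \<forall>m. 1 \<le> m \<longrightarrow> norm (cg m) \<le> K * real m powr (\<epsilon> - 1)"
proof -
  obtain K where K: "\<And>N m. 1 \<le> m \<Longrightarrow> norm (fps_nth (Q N) m) \<le> K * real m powr (\<epsilon> - 1)"
    using Q_coeff_bound[OF assms] by blast
  show ?thesis
  proof (intro exI allI impI)
    fix m :: nat assume m: "1 \<le> m"
    have "(\<lambda>N. norm (fps_nth (Q N) m)) \<longlonglongrightarrow> norm (cg m)" by (rule tendsto_norm[OF Q_lim])
    moreover have "eventually (\<lambda>N. norm (fps_nth (Q N) m) \<le> K * real m powr (\<epsilon> - 1)) sequentially"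
      using K[OF m] by (intro always_eventually allI)
    ultimately show "norm (cg m) \<le> K * real m powr (\<epsilon> - 1)"
      by (rule tendsto_le[OF trivial_limit_sequentially tendsto_const])
  qed
qed

definition wK :: "real \<Rightarrow> nat \<Rightarrow> real" where "wK K m = K^2 * real m powr (-3/2)"

lemma wK_summable: "summable (wK K)"
proof -
  have "summable (\<lambda>m. real m powr (-3/2))" by (subst summable_real_powr_iff) simp
  then show ?thesis unfolding wK_def by (rule summable_mult)
qed

lemma Q_sq_bound: "\<exists>K. \<forall>N m. (norm (fps_nth (Q N) m))^2 \<le> wK K m \<and> (norm (cg m))^2 \<le> wK K m"
proof -
  obtain K where K: "\<And>N m. 1 \<le> m \<Longrightarrow> norm (fps_nth (Q N) m) \<le> K * real m powr (1/4 - 1)"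
    using Q_coeff_bound[of "1/4"] by auto
  obtain K' where K': "\<And>m. 1 \<le> m \<Longrightarrow> norm (cg m) \<le> K' * real m powr (1/4 - 1)"
    using cg_bound[of "1/4"] by auto
  define L where "L = max K K'"
  have sq: "(L * real m powr (1/4 - 1))^2 = wK L m" if "1 \<le> m" for m
  proof -
    have "(real m powr (1/4 - 1))^2 = real m powr (of_nat 2 * (1/4 - 1))" using that by (intro powr_power) simp
    then have "(real m powr (1/4 - 1))^2 = real m powr (-3/2)" by simp
    then show ?thesis unfolding wK_def by (simp add: power_mult_distrib)
  qed
  show ?thesis
  proof (intro exI allI conjI)
    fix N m :: nat
    show "(norm (fps_nth (Q N) m))^2 \<le> wK L m"
    proof (cases "m = 0")
      case True then show ?thesis by (simp add: Q_nth_0 wK_def)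
    next
      case False
      then have m: "1 \<le> m" by simp
      have "norm (fps_nth (Q N) m) \<le> L * real m powr (1/4 - 1)"
        using K[OF m] by (rule order_trans) (simp add: L_def mult_right_mono)
      then have "(norm (fps_nth (Q N) m))^2 \<le> (L * real m powr (1/4 - 1))^2" by (rule power_mono) simp
      then show ?thesis using sq[OF m] by simp
    qed
    show "(norm (cg m))^2 \<le> wK L m"
    proof (cases "m = 0")
      case True then show ?thesis by (simp add: cg_0 wK_def)
    next
      case False
      then have m: "1 \<le> m" by simp
      have "norm (cg m) \<le> L * real m powr (1/4 - 1)"
        using K'[OF m] by (rule order_trans) (simp add: L_def mult_right_mono)
      then have "(norm (cg m))^2 \<le> (L * real m powr (1/4 - 1))^2" by (rule power_mono) simp
      then show ?thesis using sq[OF m] by simp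
    qed
  qed
qed

lemma cg_sq_summable: "summable (\<lambda>m. (norm (cg m))^2)"
proof -
  obtain K where K: "\<And>m. (norm (cg m))^2 \<le> wK K m" using Q_sq_bound by blast
  show ?thesis by (rule summable_comparison_test[OF _ wK_summable[of K]]) (use K in auto)
qed

lemma cg_sq_sum_ge1: "1 \<le> (\<Sum>m. (norm (cg m))^2)"
proof -
  obtain K where K: "\<And>N m. (norm (fps_nth (Q N) m))^2 \<le> wK K m" using Q_sq_bound by blast
  have wsum: "summable (wK K)" by (rule wK_summable)
  have part: "1 - (\<Sum>n. wK K (n + T)) \<le> (\<Sum>m<T. (norm (cg m))^2)" for T
  proof -
    have lim: "(\<lambda>N. \<Sum>m<T. (norm (fps_nth (Q N) m))^2) \<longlonglongrightarrow> (\<Sum>m<T. (norm (cg m))^2)"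
      by (intro tendsto_sum tendsto_power tendsto_norm Q_lim)
    have "1 - (\<Sum>n. wK K (n + T)) \<le> (\<Sum>m<T. (norm (fps_nth (Q N) m))^2)" for N
    proof -
      have sQ: "summable (\<lambda>m. (norm (fps_nth (Q N) m))^2)" using sum_sq_Q[of N] by (rule sums_summable)
      have one: "(\<Sum>m. (norm (fps_nth (Q N) m))^2) = 1" using sum_sq_Q[of N] by (rule sums_unique[symmetric])
      have "(\<Sum>n. (norm (fps_nth (Q N) (n + T)))^2) \<le> (\<Sum>n. wK K (n + T))"
        by (rule suminf_le) (use K summable_ignore_initial_segment[OF sQ] summable_ignore_initial_segment[OF wsum] in auto)
      moreover have "(\<Sum>n. (norm (fps_nth (Q N) (n + T)))^2) = 1 - (\<Sum>m<T. (norm (fps_nth (Q N) m))^2)"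
        using suminf_minus_initial_segment[OF sQ, of T] one by simp
      ultimately show ?thesis by simp
    qed
    then show ?thesis by (intro tendsto_le[OF _ lim tendsto_const]) auto
  qed
  have tail: "(\<lambda>T. \<Sum>n. wK K (n + T)) \<longlonglongrightarrow> 0" by (rule suminf_exist_split2[OF wsum])
  have "(\<lambda>T. 1 - (\<Sum>n. wK K (n + T))) \<longlonglongrightarrow> 1 - 0" by (intro tendsto_diff tendsto_const tail)
  moreover have "1 - (\<Sum>n. wK K (n + T)) \<le> (\<Sum>m. (norm (cg m))^2)" for T
    using part[of T] sum_le_suminf[OF cg_sq_summable, of "{..<T}"] by simp
  ultimately show ?thesis by (intro tendsto_le[OF _ tendsto_const]) auto
qed

lemma sums_Q_r:
  assumes r: "0 \<le> r" "r \<le> 1"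
  shows "(\<lambda>m. (norm (fps_nth (Q N) m))^2 * r^(2*m)) sums
           (integral {-pi..pi} (\<lambda>t. (norm (eval_fps (Q N) (of_real r * exp (\<i> * of_real t))))^2) / (2*pi))"
proof -
  have rr: "ereal r < fps_conv_radius (Q N)" by (rule ereal_lt1[OF r(2) Q_rad])
  note s = parseval_norm[OF r(1) rr]
  then have "(\<lambda>m. (1/(2*pi)) * (2 * pi * ((norm (fps_nth (Q N) m))^2 * r ^ (2*m)))) sums
      ((1/(2*pi)) * integral {-pi..pi} (\<lambda>t. (norm (eval_fps (Q N) (of_real r * exp (\<i> * of_real t))))^2))"
    by (rule sums_mult)
  then show ?thesis by simp
qed

lemma PQ_mono:
  assumes r: "0 \<le> r" "r \<le> 1" and MN: "M \<le> N"
  shows "(\<Sum>m. (norm (fps_nth (Q N) m))^2 * r^(2*m)) \<le> (\<Sum>m. (norm (fps_nth (Q M) m))^2 * r^(2*m))"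
proof -
  have iN: "(\<lambda>t. (norm (eval_fps (Q N) (of_real r * exp (\<i> * of_real t))))^2) integrable_on {-pi..pi}"
    by (rule int_eval_circ(2)[OF Q_rad r])
  have iM: "(\<lambda>t. (norm (eval_fps (Q M) (of_real r * exp (\<i> * of_real t))))^2) integrable_on {-pi..pi}"
    by (rule int_eval_circ(2)[OF Q_rad r])
  have pt: "(norm (eval_fps (Q N) (of_real r * exp (\<i> * of_real t))))^2 \<le> (norm (eval_fps (Q M) (of_real r * exp (\<i> * of_real t))))^2" for t
  proof -
    have z1: "norm (complex_of_real r * exp (\<i> * of_real t)) \<le> 1" using r by (simp add: norm_mult)
    show ?thesis unfolding eval_Q[OF z1] by (intro power_mono norm_P_mono[OF z1 MN]) simp
  qed
  have "integral {-pi..pi} (\<lambda>t. (norm (eval_fps (Q N) (of_real r * exp (\<i> * of_real t))))^2) \<le>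
        integral {-pi..pi} (\<lambda>t. (norm (eval_fps (Q M) (of_real r * exp (\<i> * of_real t))))^2)"
    by (rule integral_le[OF iN iM pt])
  then have "integral {-pi..pi} (\<lambda>t. (norm (eval_fps (Q N) (of_real r * exp (\<i> * of_real t))))^2) / (2*pi) \<le>
        integral {-pi..pi} (\<lambda>t. (norm (eval_fps (Q M) (of_real r * exp (\<i> * of_real t))))^2) / (2*pi)"
    by (rule divide_right_mono) (simp add: pi_gt_zero less_imp_le)
  then show ?thesis unfolding sums_unique[OF sums_Q_r[OF r, of N], symmetric] sums_unique[OF sums_Q_r[OF r, of M], symmetric] .
qed

lemma interior_cmp:
  assumes r: "0 \<le> r" "r \<le> 1"
  shows "summable (\<lambda>m. (norm (cg m))^2 * r^(2*m))"
    and "(\<Sum>m. (norm (cg m))^2 * r^(2*m)) \<le> (\<Sum>m. (norm (fps_nth (Q M) m))^2 * r^(2*m))"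
proof -
  have le1: "r^(2*m) \<le> 1" for m using r by (simp add: power_le_one)
  show sc: "summable (\<lambda>m. (norm (cg m))^2 * r^(2*m))"
    by (rule summable_comparison_test[OF _ cg_sq_summable]) (use le1 r in \<open>auto intro!: mult_left_le\<close>)
  show "(\<Sum>m. (norm (cg m))^2 * r^(2*m)) \<le> (\<Sum>m. (norm (fps_nth (Q M) m))^2 * r^(2*m))"
  proof (rule suminf_le_const[OF sc])
    fix T
    have lim: "(\<lambda>N. \<Sum>m<T. (norm (fps_nth (Q N) m))^2 * r^(2*m)) \<longlonglongrightarrow> (\<Sum>m<T. (norm (cg m))^2 * r^(2*m))"
      by (intro tendsto_sum tendsto_mult tendsto_const tendsto_power tendsto_norm Q_lim)
    have ev: "eventually (\<lambda>N. (\<Sum>m<T. (norm (fps_nth (Q N) m))^2 * r^(2*m)) \<le> (\<Sum>m. (norm (fps_nth (Q M) m))^2 * r^(2*m))) sequentially"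
    proof (rule eventually_sequentiallyI[of M])
      fix N assume "M \<le> N"
      have sN: "summable (\<lambda>m. (norm (fps_nth (Q N) m))^2 * r^(2*m))" by (rule sums_summable[OF sums_Q_r[OF r]])
      have "(\<Sum>m<T. (norm (fps_nth (Q N) m))^2 * r^(2*m)) \<le> (\<Sum>m. (norm (fps_nth (Q N) m))^2 * r^(2*m))"
        by (rule sum_le_suminf[OF sN]) (use r in auto)
      also have "\<dots> \<le> (\<Sum>m. (norm (fps_nth (Q M) m))^2 * r^(2*m))" by (rule PQ_mono[OF r \<open>M \<le> N\<close>])
      finally show "(\<Sum>m<T. (norm (fps_nth (Q N) m))^2 * r^(2*m)) \<le> (\<Sum>m. (norm (fps_nth (Q M) m))^2 * r^(2*m))" .
    qed
    show "(\<Sum>m<T. (norm (cg m))^2 * r^(2*m)) \<le> (\<Sum>m. (norm (fps_nth (Q M) m))^2 * r^(2*m))"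
      by (rule tendsto_le[OF trivial_limit_sequentially tendsto_const lim ev])
  qed
qed

lemma one_minus_pow_ge:
  fixes r :: real assumes "0 \<le> r" "r \<le> 1"
  shows "(1 - r) * real n * r ^ n \<le> 1 - r ^ n"
proof -
  have "1 - r ^ n = (1 - r) * (\<Sum>i<n. r ^ i)" by (rule one_diff_power_eq)
  moreover have "real n * r ^ n \<le> (\<Sum>i<n. r ^ i)"
  proof -
    have "(\<Sum>i<n. r ^ n) \<le> (\<Sum>i<n. r ^ i)" by (intro sum_mono power_decreasing) (use assms in auto)
    then show ?thesis by simp
  qed
  ultimately show ?thesis using assms by (simp add: mult.assoc mult_left_mono)
qed

lemma one_minus_pow_le:
  fixes r :: real assumes "0 \<le> r" "r \<le> 1"
  shows "1 - r ^ n \<le> real n * (1 - r)"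
proof -
  have "1 + real n * (- (1 - r)) \<le> (1 + - (1 - r)) ^ n" by (rule Bernoulli_inequality) (use assms in simp)
  then show ?thesis by (simp add: algebra_simps)
qed

theorem not_summable_cg: "\<not> summable (\<lambda>m. real m * (norm (cg m))^2)"
proof
  assume sm: "summable (\<lambda>m. real m * (norm (cg m))^2)"
  define S where "S = (\<Sum>m. real m * (norm (cg m))^2)"
  define M :: nat where "M = nat \<lceil>2 * S\<rceil> + 1"
  have M2S: "2 * S < real M" unfolding M_def by linarith
  have "(\<lambda>T. \<Sum>m<T. real m * (norm (fps_nth (Q M) m))^2) \<longlonglongrightarrow> real M + 1"
    using deg_Q[of M] by (simp add: sums_def)
  then have "eventually (\<lambda>T. real M < (\<Sum>m<T. real m * (norm (fps_nth (Q M) m))^2)) sequentially"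
    by (rule order_tendstoD) simp
  then obtain T where T: "real M < (\<Sum>m<T. real m * (norm (fps_nth (Q M) m))^2)"
    by (auto simp: eventually_sequentially)
  have T1: "1 \<le> T"
  proof (rule ccontr)
    assume "\<not> 1 \<le> T" then have "T = 0" by simp
    then show False using T by simp
  qed
  define r :: real where "r = 1 - 1 / (4 * real T)"
  have r01: "0 \<le> r" "r < 1" "r \<le> 1" using T1 by (auto simp: r_def field_simps)
  have rT: "1/2 \<le> r ^ (2*T)"
  proof -
    have "1 + real (2*T) * (- (1 / (4 * real T))) \<le> (1 + - (1 / (4 * real T))) ^ (2*T)"
      by (rule Bernoulli_inequality) (use T1 in \<open>simp add: field_simps\<close>)
    moreover have "1 + real (2*T) * (- (1 / (4 * real T))) = 1/2" using T1 by (simp add: field_simps)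
    ultimately show ?thesis by (simp add: r_def)
  qed
  define x where "x m = (norm (cg m))^2" for m
  define y where "y m = (norm (fps_nth (Q M) m))^2" for m
  have sx: "summable x" unfolding x_def by (rule cg_sq_summable)
  have x1: "1 \<le> suminf x" unfolding x_def by (rule cg_sq_sum_ge1)
  have sy: "y sums 1" unfolding y_def by (rule sum_sq_Q)
  have sxr: "summable (\<lambda>m. x m * r^(2*m))" unfolding x_def by (rule interior_cmp(1)[OF r01(1,3)])
  have cmp: "(\<Sum>m. x m * r^(2*m)) \<le> (\<Sum>m. y m * r^(2*m))" unfolding x_def y_def by (rule interior_cmp(2)[OF r01(1,3)])
  have syr: "summable (\<lambda>m. y m * r^(2*m))" unfolding y_def by (rule sums_summable[OF sums_Q_r[OF r01(1,3)]])
  have x0: "0 \<le> x m" "0 \<le> y m" for m by (simp_all add: x_def y_def)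
  have A1: "(\<Sum>m. x m * (1 - r^(2*m))) = suminf x - (\<Sum>m. x m * r^(2*m))"
    using suminf_diff[OF sx sxr] by (simp add: algebra_simps)
  have A2: "(\<Sum>m. y m * (1 - r^(2*m))) = 1 - (\<Sum>m. y m * r^(2*m))"
    using suminf_diff[OF sums_summable[OF sy] syr] sums_unique[OF sy] by (simp add: algebra_simps)
  have sy1: "summable (\<lambda>m. y m * (1 - r^(2*m)))"
    using summable_diff[OF sums_summable[OF sy] syr] by (simp add: algebra_simps)
  have lower: "(1 - r) * real M \<le> (\<Sum>m. x m * (1 - r^(2*m)))"
  proof -
    have "(1 - r) * real M \<le> (1 - r) * (\<Sum>m<T. real m * y m)"
      using T r01 by (intro mult_left_mono) (auto simp: y_def)
    also have "\<dots> = (\<Sum>m<T. (1 - r) * real m * y m)" by (simp add: sum_distrib_left mult.assoc)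
    also have "\<dots> \<le> (\<Sum>m<T. y m * (1 - r^(2*m)))"
    proof (rule sum_mono)
      fix m assume m: "m \<in> {..<T}"
      have "r ^ (2*T) \<le> r ^ (2*m)" using m r01 by (intro power_decreasing) auto
      then have h: "1/2 \<le> r ^ (2*m)" using rT by simp
      have "(1 - r) * real m = (1 - r) * real (2*m) * (1/2)" by simp
      also have "\<dots> \<le> (1 - r) * real (2*m) * r^(2*m)" using r01 h by (intro mult_left_mono) auto
      also have "\<dots> \<le> 1 - r^(2*m)" by (rule one_minus_pow_ge[OF r01(1,3)])
      finally have "(1 - r) * real m \<le> 1 - r^(2*m)" .
      then have "y m * ((1 - r) * real m) \<le> y m * (1 - r^(2*m))" by (rule mult_left_mono[OF _ x0(2)])
      then show "(1 - r) * real m * y m \<le> y m * (1 - r^(2*m))" by (simp add: mult_ac)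
    qed
    also have "\<dots> \<le> (\<Sum>m. y m * (1 - r^(2*m)))"
      by (rule sum_le_suminf[OF sy1]) (use x0 r01 in \<open>auto intro!: mult_nonneg_nonneg simp: power_le_one\<close>)
    also have "\<dots> = 1 - (\<Sum>m. y m * r^(2*m))" by (rule A2)
    also have "\<dots> \<le> suminf x - (\<Sum>m. x m * r^(2*m))" using x1 cmp by simp
    also have "\<dots> = (\<Sum>m. x m * (1 - r^(2*m)))" by (rule A1[symmetric])
    finally show ?thesis .
  qed
  have upper: "(\<Sum>m. x m * (1 - r^(2*m))) \<le> 2 * (1 - r) * S"
  proof -
    have sxm: "summable (\<lambda>m. 2 * (1 - r) * (real m * x m))" using sm unfolding x_def by (rule summable_mult)
    have "(\<Sum>m. x m * (1 - r^(2*m))) \<le> (\<Sum>m. 2 * (1 - r) * (real m * x m))"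
    proof (rule suminf_le[OF _ _ sxm])
      show "summable (\<lambda>m. x m * (1 - r^(2*m)))" using summable_diff[OF sx sxr] by (simp add: algebra_simps)
      fix m
      have "1 - r^(2*m) \<le> real (2*m) * (1 - r)" by (rule one_minus_pow_le[OF r01(1,3)])
      then have "x m * (1 - r^(2*m)) \<le> x m * (real (2*m) * (1 - r))" by (rule mult_left_mono[OF _ x0(1)])
      then show "x m * (1 - r^(2*m)) \<le> 2 * (1 - r) * (real m * x m)" by (simp add: mult_ac)
    qed
    also have "\<dots> = 2 * (1 - r) * S" unfolding S_def x_def by (rule suminf_mult[OF sm])
    finally show ?thesis .
  qed
  have h: "(1 - r) * real M \<le> 2 * (1 - r) * S" by (rule order_trans[OF lower upper])
  have e: "2 * (1 - r) * S = (1 - r) * (2 * S)" by (simp only: mult.commute mult.left_commute mult.assoc)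
  have "(1 - r) * real M \<le> (1 - r) * (2 * S)" using h e by linarith
  then have "real M \<le> 2 * S" using r01 by simp
  then show False using M2S by simp
qed

lemma P_cont: "continuous_on circle (P N)"
proof -
  have "continuous_on circle (\<lambda>z. z * (\<Prod>k<N. (complex_of_real (aa k) - z) / (1 - complex_of_real (aa k) * z)))"
  proof (intro continuous_intros ballI)
    fix k z assume "z \<in> circle"
    then have "norm z \<le> 1" by simp
    then show "1 - complex_of_real (aa k) * z \<noteq> 0" by (rule one_minus_az_nz[OF aa_bounds(3,2)])
  qed
  then show ?thesis by (simp add: P_def[abs_def] bl_def)
qed

lemma Pm_meas: "Pm N \<in> borel_measurable (restrict_space borel circle)"
proof -
  have "(\<lambda>z. if z = 1 then 1 else P N z) \<in> borel_measurable (restrict_space borel circle)"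
  proof (rule measurable_If)
    show "(\<lambda>z. 1) \<in> borel_measurable (restrict_space borel circle)" by simp
    show "P N \<in> borel_measurable (restrict_space borel circle)"
      by (rule borel_measurable_continuous_on_restrict[OF P_cont])
    have "{x \<in> space (restrict_space borel circle). x = 1} = circle \<inter> {1}"
      by (auto simp: space_restrict_space)
    moreover have "circle \<inter> {1} \<in> sets (restrict_space borel circle)"
      by (auto simp: sets_restrict_space)
    ultimately show "{x \<in> space (restrict_space borel circle). x = 1} \<in> sets (restrict_space borel circle)" by simp
  qed
  then show ?thesis by (simp add: Pm_def[abs_def])
qed

lemma gb_meas: "gb \<in> borel_measurable (restrict_space borel circle)"
proof (rule borel_measurable_LIMSEQ_metric[OF Pm_meas])
  fix x assume "x \<in> space (restrict_space borel circle)"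
  then have "norm x = 1" by (simp add: space_restrict_space)
  then show "(\<lambda>i. Pm i x) \<longlonglongrightarrow> gb x" by (rule P_conv)
qed

lemma exp_circ_meas: "(\<lambda>t::real. exp (\<i> * complex_of_real t)) \<in> measurable borel (restrict_space borel circle)"
proof (rule measurable_restrict_space2)
  show "(\<lambda>t::real. exp (\<i> * complex_of_real t)) \<in> space borel \<rightarrow> circle" by simp
  show "(\<lambda>t::real. exp (\<i> * complex_of_real t)) \<in> borel_measurable borel"
    by (intro borel_measurable_continuous_onI continuous_intros)
qed

lemma gb_exp_meas: "(\<lambda>t::real. gb (exp (\<i> * complex_of_real t))) \<in> borel_measurable borel"
  using measurable_compose[OF exp_circ_meas gb_meas] by (simp add: o_def)

definition fF :: "complex \<Rightarrow> complex" where "fF z = cnj (gb z)"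

lemma cnj_meas: "cnj \<in> borel_measurable borel"
proof (rule borel_measurable_continuous_onI)
  show "continuous_on UNIV cnj" using continuous_on_cnj[OF continuous_on_id] by simp
qed

lemma fF_meas: "fF \<in> borel_measurable (restrict_space borel circle)"
  using measurable_compose[OF gb_meas cnj_meas] by (simp add: o_def fF_def[abs_def])

lemma fF_circ: "fF ` circle \<subseteq> circle"
  by (auto simp: fF_def norm_gb)

lemma fourier_fF:
  fixes n :: int
  shows "fourier_coeff fF n = cnj (integral {-pi..pi} (\<lambda>t. gb (exp (\<i> * of_real t)) * exp (- \<i> * of_int (- n) * of_real t))) / of_real (2*pi)"
proof -
  define h where "h t = fF (exp (\<i> * complex_of_real t)) * exp (- \<i> * of_int n * complex_of_real t)" for t
  define g where "g t = gb (exp (\<i> * of_real t)) * exp (- \<i> * of_int (- n) * of_real t)" for t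
  have hg: "h t = cnj (g t)" for t
    by (simp add: h_def g_def fF_def exp_cnj)
  have gi: "g integrable_on {-pi..pi}" unfolding g_def[abs_def] by (rule gb_fourier(1))
  have hi: "h integrable_on {-pi..pi}" unfolding hg[abs_def] using gi by (simp add: integrable_on_cnj_iff)
  have nexp: "norm (exp (- \<i> * of_int n * complex_of_real t)) = 1" for t
  proof -
    have "exp (- \<i> * of_int n * complex_of_real t) = exp (\<i> * complex_of_real (- (real_of_int n * t)))" by (simp add: mult.assoc)
    then show ?thesis by (simp only: norm_exp_i_real)
  qed
  have hb: "norm (h t) \<le> 1" for t
    unfolding h_def norm_mult nexp by (simp add: fF_def norm_gb)
  have habs: "h absolutely_integrable_on {-pi..pi}"
    by (rule absolutely_integrable_integrable_bound[OF _ hi, of "\<lambda>t. 1"]) (auto simp: hb intro: integrable_continuous_interval continuous_intros)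
  have m1: "(\<lambda>t. cnj (gb (exp (\<i> * complex_of_real t)))) \<in> borel_measurable borel"
    using measurable_compose[OF gb_exp_meas cnj_meas] by (simp add: o_def)
  have m2: "(\<lambda>t. exp (- \<i> * of_int n * complex_of_real t)) \<in> borel_measurable borel"
    by (intro borel_measurable_continuous_onI continuous_intros)
  have hm: "h \<in> borel_measurable borel"
    unfolding h_def fF_def by (rule borel_measurable_times[OF m1 m2])
  have hm2: "(\<lambda>x. indicator {-pi..pi} x *\<^sub>R h x) \<in> borel_measurable lborel" using hm by simp
  have si: "set_integrable lborel {-pi..pi} h"
    using habs unfolding set_integrable_def using integrable_completion[OF hm2] by simp
  have "(LBINT t=-pi..pi. h t) = integral {-pi..pi} h"
    by (rule interval_integral_eq_integral[OF _ si]) simp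
  also have "\<dots> = cnj (integral {-pi..pi} g)" unfolding hg[abs_def] by (simp add: integral_cnj)
  finally have e: "(LBINT t=-pi..pi. h t) = cnj (integral {-pi..pi} g)" .
  have "fourier_coeff fF n = complex_of_real (1 / (2 * pi)) * (LBINT t=-pi..pi. h t)"
    unfolding fourier_coeff_def h_def by simp
  also have "\<dots> = cnj (integral {-pi..pi} g) / of_real (2*pi)" unfolding e by (simp add: field_simps)
  finally show ?thesis unfolding g_def .
qed

lemma norm_fourier_fF:
  fixes n :: int
  shows "norm (fourier_coeff fF n) = (if n < 0 then norm (cg (nat (- n))) else 0)"
proof (cases "n < 0")
  case True
  have "int (nat (- n)) = - n" using True by simp
  then have "integral {-pi..pi} (\<lambda>t. gb (exp (\<i> * of_real t)) * exp (- \<i> * of_int (- n) * of_real t)) = cg (nat (- n)) * of_real (2*pi)"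
    unfolding cg_def by (simp add: pi_gt_zero)
  then show ?thesis using True by (simp add: fourier_fF norm_divide norm_mult pi_gt_zero)
next
  case False
  show ?thesis
  proof (cases "n = 0")
    case True
    have "integral {-pi..pi} (\<lambda>t. gb (exp (\<i> * of_real t)) * exp (- \<i> * of_int (- n) * of_real t)) = cg 0 * of_real (2*pi)"
      unfolding cg_def using True by (simp add: pi_gt_zero)
    then show ?thesis using True by (simp add: fourier_fF cg_0)
  next
    case False
    then have "- n < 0" using \<open>\<not> n < 0\<close> by simp
    have z: "integral {-pi..pi} (\<lambda>t. gb (exp (\<i> * of_real t)) * exp (- \<i> * of_int (- n) * of_real t)) = 0"
      by (rule gb_fourier_neg[OF \<open>- n < 0\<close>])
    show ?thesis using \<open>\<not> n < 0\<close> by (simp only: fourier_fF z) simp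
  qed
qed

lemma fourier_fF_zero: "n \<ge> 0 \<Longrightarrow> fourier_coeff fF n = 0"
  using norm_fourier_fF[of n] by simp

lemma summable_on_iff_cg:
  fixes p :: real
  shows "(\<lambda>n::int. real_of_int \<bar>n\<bar> powr p * (cmod (fourier_coeff fF n))\<^sup>2) summable_on UNIV
         \<longleftrightarrow> summable (\<lambda>m. real m powr p * (norm (cg m))^2)"
proof -
  define \<phi> where "\<phi> n = real_of_int \<bar>n\<bar> powr p * (cmod (fourier_coeff fF n))\<^sup>2" for n :: int
  define e :: "nat \<Rightarrow> int" where "e m = - int m" for m
  have inj: "inj_on e UNIV" by (auto simp: e_def inj_on_def)
  have "\<phi> summable_on UNIV \<longleftrightarrow> \<phi> summable_on (range e)"
  proof (rule summable_on_cong_neutral)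
    fix x assume "x \<in> UNIV - range e"
    then have "x > 0"
    proof -
      assume a: "x \<in> UNIV - range e"
      show "x > 0"
      proof (rule ccontr)
        assume "\<not> x > 0"
        then have "x = e (nat (- x))" by (simp add: e_def)
        then show False using a by auto
      qed
    qed
    then show "\<phi> x = 0" by (simp add: \<phi>_def norm_fourier_fF)
  qed auto
  also have "\<dots> \<longleftrightarrow> (\<phi> \<circ> e) summable_on UNIV" by (rule summable_on_reindex[OF inj])
  also have "(\<phi> \<circ> e) = (\<lambda>m. real m powr p * (norm (cg m))^2)"
  proof
    fix m
    show "(\<phi> \<circ> e) m = real m powr p * (norm (cg m))^2"
    proof (cases "m = 0")
      case True then show ?thesis by (simp add: \<phi>_def e_def cg_0)
    next
      case False then show ?thesis by (simp add: \<phi>_def e_def norm_fourier_fF)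
    qed
  qed
  also have "(\<lambda>m. real m powr p * (norm (cg m))^2) summable_on UNIV \<longleftrightarrow> summable (\<lambda>m. real m powr p * (norm (cg m))^2)"
    by (rule summable_on_UNIV_nonneg_real_iff) simp
  finally show ?thesis unfolding \<phi>_def .
qed

lemma cg_summable_small:
  fixes s :: real assumes "s < 1/2"
  shows "summable (\<lambda>m. real m powr (2 * s) * (norm (cg m))^2)"
proof -
  define \<epsilon> where "\<epsilon> = min 1 ((1 - 2 * s) / 4)"
  have e1: "0 < \<epsilon>" using assms by (simp add: \<epsilon>_def)
  have e2: "\<epsilon> \<le> 1" unfolding \<epsilon>_def by (rule min.cobounded1)
  have e3: "\<epsilon> \<le> (1 - 2 * s) / 4" unfolding \<epsilon>_def by (rule min.cobounded2)
  note eps = e1 e2 e3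
  obtain K where K: "\<And>m. 1 \<le> m \<Longrightarrow> norm (cg m) \<le> K * real m powr (\<epsilon> - 1)" using cg_bound[OF eps(1,2)] by blast
  define ex where "ex = 2 * s + 2 * (\<epsilon> - 1)"
  have exl: "ex < -1" using eps assms by (simp add: ex_def)
  have sm: "summable (\<lambda>m. K^2 * real m powr ex)"
    by (rule summable_mult) (subst summable_real_powr_iff, rule exl)
  show ?thesis
  proof (rule summable_comparison_test[OF _ sm])
    show "\<exists>N. \<forall>m\<ge>N. norm (real m powr (2 * s) * (norm (cg m))^2) \<le> K^2 * real m powr ex"
    proof (intro exI allI impI)
      fix m :: nat assume "1 \<le> m"
      then have mpos: "0 < real m" by simp
      have "(norm (cg m))^2 \<le> (K * real m powr (\<epsilon> - 1))^2" by (rule power_mono[OF K[OF \<open>1 \<le> m\<close>]]) simp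
      also have "\<dots> = K^2 * real m powr (2 * (\<epsilon> - 1))"
      proof -
        have "(real m powr (\<epsilon> - 1))^2 = real m powr (of_nat 2 * (\<epsilon> - 1))" using mpos by (intro powr_power) simp
        then show ?thesis by (simp add: power_mult_distrib)
      qed
      finally have "real m powr (2 * s) * (norm (cg m))^2 \<le> real m powr (2 * s) * (K^2 * real m powr (2 * (\<epsilon> - 1)))"
        by (rule mult_left_mono) simp
      also have "\<dots> = K^2 * real m powr ex" using mpos by (simp add: ex_def powr_add)
      finally show "norm (real m powr (2 * s) * (norm (cg m))^2) \<le> K^2 * real m powr ex" by simp
    qed
  qed
qed

lemma cg_not_summable_large:
  fixes s :: real assumes "1/2 \<le> s"
  shows "\<not> summable (\<lambda>m. real m powr (2 * s) * (norm (cg m))^2)"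
proof
  assume sm: "summable (\<lambda>m. real m powr (2 * s) * (norm (cg m))^2)"
  have "summable (\<lambda>m. real m * (norm (cg m))^2)"
  proof (rule summable_comparison_test[OF _ sm])
    show "\<exists>N. \<forall>m\<ge>N. norm (real m * (norm (cg m))^2) \<le> real m powr (2 * s) * (norm (cg m))^2"
    proof (intro exI allI impI)
      fix m :: nat assume "1 \<le> m"
      then have m1: "1 \<le> real m" by simp
      have "real m = real m powr 1" using m1 by simp
      also have "\<dots> \<le> real m powr (2 * s)" using assms m1 by (intro powr_mono) auto
      finally have "real m * (norm (cg m))^2 \<le> real m powr (2 * s) * (norm (cg m))^2" by (rule mult_right_mono) simp
      then show "norm (real m * (norm (cg m))^2) \<le> real m powr (2 * s) * (norm (cg m))^2" by simp
    qed
  qed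
  then show False using not_summable_cg by blast
qed

theorem mainTheorem7:
  shows "\<exists>f :: complex \<Rightarrow> complex.
           f \<in> borel_measurable (restrict_space borel circle) \<and>
           f ` circle \<subseteq> circle \<and>
           (\<forall>n::int. n \<ge> 0 \<longrightarrow> fourier_coeff f n = 0) \<and>
           (\<forall>s'::real. s' < 1/2 \<longrightarrow>
              (\<lambda>n::int. real_of_int \<bar>n\<bar> powr (2 * s') * (cmod (fourier_coeff f n))\<^sup>2) summable_on UNIV) \<and>
           (\<forall>s::real. s \<ge> 1/2 \<longrightarrow>
              \<not> ((\<lambda>n::int. real_of_int \<bar>n\<bar> powr (2 * s) * (cmod (fourier_coeff f n))\<^sup>2) summable_on UNIV))"
proof (intro exI conjI allI impI)
  show "fF \<in> borel_measurable (restrict_space borel circle)" by (rule fF_meas)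
  show "fF ` circle \<subseteq> circle" by (rule fF_circ)
  fix n :: int assume "0 \<le> n" then show "fourier_coeff fF n = 0" by (rule fourier_fF_zero)
next
  fix s' :: real assume "s' < 1/2"
  then show "(\<lambda>n::int. real_of_int \<bar>n\<bar> powr (2 * s') * (cmod (fourier_coeff fF n))\<^sup>2) summable_on UNIV"
    unfolding summable_on_iff_cg by (rule cg_summable_small)
next
  fix s :: real assume "1/2 \<le> s"
  then show "\<not> (\<lambda>n::int. real_of_int \<bar>n\<bar> powr (2 * s) * (cmod (fourier_coeff fF n))\<^sup>2) summable_on UNIV"
    unfolding summable_on_iff_cg by (rule cg_not_summable_large)
qed

end
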